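(* Let $n\ge 4$. The twisted braid group $\mathcal{TB}_n$ has the following reduced presentation: it is isomorphic to the group $$G=\langle\, \sigma_1, b_1, v_1,\dots,v_{n-1} \mid R\,\rangle$$ where $R$ consists of the relations $v_iv_{i+1}v_i=v_{i+1}v_iv_{i+1}$ ($1\le i\le n-2$), $v_iv_j=v_jv_i$ ($|i-j|\ge2$), $v_i^2=1$ ($1\le i\le n-1$), $\sigma_1v_j=v_j\sigma_1$ ($j>2$), $b_1^2=1$, $b_1v_j=v_jb_1$ ($j>1$), $(v_1\sigma_1v_1)(v_2\sigma_1v_2)(v_1\sigma_1v_1)=(v_2\sigma_1v_2)(v_1\sigma_1v_1)(v_2\sigma_1v_2)$, $\sigma_1(v_2v_3v_1v_2\sigma_1v_2v_1v_3v_2)=(v_2v_3v_1v_2\sigma_1v_2v_1v_3v_2)\sigma_1$, $b_1(v_1b_1v_1)=(v_1b_1v_1)b_1$, $\sigma_1(v_2v_1b_1v_1v_2)=(v_2v_1b_1v_1v_2)\sigma_1$, $(v_1b_1v_1)b_1\sigma_1b_1(v_1b_1v_1)=v_1\sigma_1v_1$. The isomorphism $G\to\mathcal{TB}_n$ sends $\sigma_1, b_1, v_1,\dots,v_{n-1}$ to the elements of the same names, and its inverse sends $v_i\mapsto v_i$, $\sigma_1\mapsto\sigma_1$, $b_1\mapsto b_1$, $\sigma_{i+1}\mapsto (v_i\cdots v_2v_1)(v_{i+1}\cdots v_3v_2)\sigma_1(v_2v_3\cdots v_{i+1})(v_1v_2\cdots v_i)$ for $1\le i\le n-2$, and $b_{i+1}\mapsto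 (v_iv_{i-1}\cdots v_1)b_1(v_1v_2\cdots v_i)$ for $1\le i\le n-1$.
   Context: The twisted braid group $\mathcal{TB}_n$ (the group of isotopy classes of twisted braids on $n$ strands, i.e. braids on $n$ strands with classical crossings, virtual crossings and bars on strands, under braid concatenation) is the group with generators $\sigma_1,\dots,\sigma_{n-1}$ (classical crossing of strands $i,i+1$), $v_1,\dots,v_{n-1}$ (virtual crossing of strands $i,i+1$) and $b_1,\dots,b_n$ (a bar on strand $i$), subject to the relations: braid relations $\sigma_i\sigma_{i+1}\sigma_i=\sigma_{i+1}\sigma_i\sigma_{i+1}$ ($1\le i\le n-2$), $\sigma_i\sigma_j=\sigma_j\sigma_i$ ($|i-j|\ge2$); virtual relations $v_i^2=1$, $v_iv_j=v_jv_i$ ($|i-j|\ge2$), $v_iv_{i+1}v_i=v_{i+1}v_iv_{i+1}$; twisted relations $b_i^2=1$ ($1\le i\le n$), $b_ib_j=b_jb_i$ ($i\ne j$); mixed relations $\sigma_iv_j=v_j\sigma_i$ ($|i-j|\ge2$), $v_i\sigma_{i+1}v_i=v_{i+1}\sigma_iv_{i+1}$ ($1\le i\le n-2$), $b_iv_i=v_ib_{i+1}$ ($1\le i\le n-1$), $b_ib_{i+1}\sigma_ib_{i+1}b_i=v_i\sigma_iv_i$ ($1\le i\le n-1$), $b_iv_j=v_jb_i$ ($j>i$ or $j<i-1$), $b_i\sigma_j=\sigma_jb_i$ ($j>i$ or $j<i-1$). *)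

theory Defs
  imports "HOL-Algebra.Group"
begin

text \<open>A word over generators 'a is a list of letters (x, e) where e = True means
the inverse letter x^-1.\<close>

type_synonym 'a word = "('a \<times> bool) list"

definition wf_word :: "'a set \<Rightarrow> 'a word \<Rightarrow> bool" where
  "wf_word gens w \<longleftrightarrow> (\<forall>x\<in>set w. fst x \<in> gens)"

inductive pres_eq :: "'a set \<Rightarrow> ('a word \<times> 'a word) set \<Rightarrow> 'a word \<Rightarrow> 'a word \<Rightarrow> bool"
  for gens R where
  refl: "wf_word gens w \<Longrightarrow> pres_eq gens R w w"
| sym: "pres_eq gens R u w \<Longrightarrow> pres_eq gens R w u"
| trans: "pres_eq gens R u v \<Longrightarrow> pres_eq gens R v w \<Longrightarrow> pres_eq gens R u w"
| cancel: "wf_word gens u \<Longrightarrow> wf_word gens v \<Longrightarrow> x \<in> gens \<Longrightarrow>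
     pres_eq gens R (u @ [(x, e), (x, \<not> e)] @ v) (u @ v)"
| rel: "(l, r) \<in> R \<Longrightarrow> wf_word gens l \<Longrightarrow> wf_word gens r \<Longrightarrow>
     wf_word gens u \<Longrightarrow> wf_word gens v \<Longrightarrow>
     pres_eq gens R (u @ l @ v) (u @ r @ v)"

definition pres_class :: "'a set \<Rightarrow> ('a word \<times> 'a word) set \<Rightarrow> 'a word \<Rightarrow> 'a word set" where
  "pres_class gens R w = {w'. pres_eq gens R w w'}"

definition presented_group :: "'a set \<Rightarrow> ('a word \<times> 'a word) set \<Rightarrow> ('a word set) monoid" where
  "presented_group gens R =
     \<lparr> carrier = pres_class gens R ` {w. wf_word gens w},
       mult = (\<lambda>A B. pres_class gens R ((SOME a. a \<in> A) @ (SOME b. b \<in> B))),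
       one = pres_class gens R [] \<rparr>"

datatype tbgen = TSig nat | TVir nat | TBar nat

definition s :: "nat \<Rightarrow> tbgen word" where "s i = [(TSig i, False)]"
definition v :: "nat \<Rightarrow> tbgen word" where "v i = [(TVir i, False)]"
definition b :: "nat \<Rightarrow> tbgen word" where "b i = [(TBar i, False)]"

definition tb_gens :: "nat \<Rightarrow> tbgen set" where
  "tb_gens n = {TSig i | i. 1 \<le> i \<and> i \<le> n - 1} \<union> {TVir i | i. 1 \<le> i \<and> i \<le> n - 1}
             \<union> {TBar i | i. 1 \<le> i \<and> i \<le> n}"

definition tb_rels :: "nat \<Rightarrow> (tbgen word \<times> tbgen word) set" where
  "tb_rels n =
     \<comment> \<open>braid relations\<close>
     {(s i @ s (i+1) @ s i, s (i+1) @ s i @ s (i+1)) | i. 1 \<le> i \<and> i \<le> n - 2}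
   \<union> {(s i @ s j, s j @ s i) | i j. 1 \<le> i \<and> i \<le> n - 1 \<and> 1 \<le> j \<and> j \<le> n - 1 \<and> (i + 2 \<le> j \<or> j + 2 \<le> i)}
     \<comment> \<open>virtual relations\<close>
   \<union> {(v i @ v i, []) | i. 1 \<le> i \<and> i \<le> n - 1}
   \<union> {(v i @ v j, v j @ v i) | i j. 1 \<le> i \<and> i \<le> n - 1 \<and> 1 \<le> j \<and> j \<le> n - 1 \<and> (i + 2 \<le> j \<or> j + 2 \<le> i)}
   \<union> {(v i @ v (i+1) @ v i, v (i+1) @ v i @ v (i+1)) | i. 1 \<le> i \<and> i \<le> n - 2}
     \<comment> \<open>twisted relations\<close>
   \<union> {(b i @ b i, []) | i. 1 \<le> i \<and> i \<le> n}
   \<union> {(b i @ b j, b j @ b i) | i j. 1 \<le> i \<and> i \<le> n \<and> 1 \<le> j \<and> j \<le> n \<and> i \<noteq> j}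
     \<comment> \<open>mixed relations\<close>
   \<union> {(s i @ v j, v j @ s i) | i j. 1 \<le> i \<and> i \<le> n - 1 \<and> 1 \<le> j \<and> j \<le> n - 1 \<and> (i + 2 \<le> j \<or> j + 2 \<le> i)}
   \<union> {(v i @ s (i+1) @ v i, v (i+1) @ s i @ v (i+1)) | i. 1 \<le> i \<and> i \<le> n - 2}
   \<union> {(b i @ v i, v i @ b (i+1)) | i. 1 \<le> i \<and> i \<le> n - 1}
   \<union> {(b i @ b (i+1) @ s i @ b (i+1) @ b i, v i @ s i @ v i) | i. 1 \<le> i \<and> i \<le> n - 1}
   \<union> {(b i @ v j, v j @ b i) | i j. 1 \<le> i \<and> i \<le> n \<and> 1 \<le> j \<and> j \<le> n - 1 \<and> (j > i \<or> j + 1 < i)}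
   \<union> {(b i @ s j, s j @ b i) | i j. 1 \<le> i \<and> i \<le> n \<and> 1 \<le> j \<and> j \<le> n - 1 \<and> (j > i \<or> j + 1 < i)}"

definition TB :: "nat \<Rightarrow> (tbgen word set) monoid" where
  "TB n = presented_group (tb_gens n) (tb_rels n)"

definition red_gens :: "nat \<Rightarrow> tbgen set" where
  "red_gens n = {TSig 1, TBar 1} \<union> {TVir i | i. 1 \<le> i \<and> i \<le> n - 1}"

definition red_rels :: "nat \<Rightarrow> (tbgen word \<times> tbgen word) set" where
  "red_rels n =
     {(v i @ v (i+1) @ v i, v (i+1) @ v i @ v (i+1)) | i. 1 \<le> i \<and> i \<le> n - 2}
   \<union> {(v i @ v j, v j @ v i) | i j. 1 \<le> i \<and> i \<le> n - 1 \<and> 1 \<le> j \<and> j \<le> n - 1 \<and> (i + 2 \<le> j \<or> j + 2 \<le> i)}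
   \<union> {(v i @ v i, []) | i. 1 \<le> i \<and> i \<le> n - 1}
   \<union> {(s 1 @ v j, v j @ s 1) | j. 2 < j \<and> j \<le> n - 1}
   \<union> {(b 1 @ b 1, [])}
   \<union> {(b 1 @ v j, v j @ b 1) | j. 1 < j \<and> j \<le> n - 1}
   \<union> {((v 1 @ s 1 @ v 1) @ (v 2 @ s 1 @ v 2) @ (v 1 @ s 1 @ v 1),
        (v 2 @ s 1 @ v 2) @ (v 1 @ s 1 @ v 1) @ (v 2 @ s 1 @ v 2))}
   \<union> {(s 1 @ (v 2 @ v 3 @ v 1 @ v 2 @ s 1 @ v 2 @ v 1 @ v 3 @ v 2),
        (v 2 @ v 3 @ v 1 @ v 2 @ s 1 @ v 2 @ v 1 @ v 3 @ v 2) @ s 1)}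
   \<union> {(b 1 @ (v 1 @ b 1 @ v 1), (v 1 @ b 1 @ v 1) @ b 1)}
   \<union> {(s 1 @ (v 2 @ v 1 @ b 1 @ v 1 @ v 2), (v 2 @ v 1 @ b 1 @ v 1 @ v 2) @ s 1)}
   \<union> {((v 1 @ b 1 @ v 1) @ b 1 @ s 1 @ b 1 @ (v 1 @ b 1 @ v 1), v 1 @ s 1 @ v 1)}"

definition RedTB :: "nat \<Rightarrow> (tbgen word set) monoid" where
  "RedTB n = presented_group (red_gens n) (red_rels n)"

text \<open>v_i v_(i-1) ... v_j  and  v_j v_(j+1) ... v_i  (empty if i < j).\<close>
definition vdown :: "nat \<Rightarrow> nat \<Rightarrow> tbgen word" where
  "vdown i j = concat (map v (rev [j..<i+1]))"
definition vup :: "nat \<Rightarrow> nat \<Rightarrow> tbgen word" where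
  "vup j i = concat (map v [j..<i+1])"

text \<open>Images of sigma_(i+1) and b_(i+1) under the inverse isomorphism.\<close>
definition sig_word :: "nat \<Rightarrow> tbgen word" where
  "sig_word i = vdown i 1 @ vdown (i+1) 2 @ s 1 @ vup 2 (i+1) @ vup 1 i"
definition bar_word :: "nat \<Rightarrow> tbgen word" where
  "bar_word i = vdown i 1 @ b 1 @ vup 1 i"

end

theory Submission
  imports Defs
begin

definition inv_word :: "'a word \<Rightarrow> 'a word" where
  "inv_word w = rev (map (\<lambda>(x,e). (x, \<not> e)) w)"

definition wsubst :: "('a \<Rightarrow> 'b word) \<Rightarrow> 'a word \<Rightarrow> 'b word" where
  "wsubst f w = concat (map (\<lambda>(x,e). if e then inv_word (f x) else f x) w)"

lemma wsubst_simps[simp]: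
  "wsubst f [] = []"
  "wsubst f ((x,e)#w) = (if e then inv_word (f x) else f x) @ wsubst f w"
  "wsubst f (u @ w) = wsubst f u @ wsubst f w"
  by (auto simp: wsubst_def)

lemma inv_word_simps[simp]:
  "inv_word [] = []"
  "inv_word ((x,e)#w) = inv_word w @ [(x, \<not>e)]"
  "inv_word (u @ w) = inv_word w @ inv_word u"
  by (auto simp: inv_word_def)

lemma wf_word_simps[simp]:
  "wf_word gens []"
  "wf_word gens (a#w) \<longleftrightarrow> fst a \<in> gens \<and> wf_word gens w"
  "wf_word gens (u@w) \<longleftrightarrow> wf_word gens u \<and> wf_word gens w"
  "wf_word gens (inv_word w) \<longleftrightarrow> wf_word gens w"
  by (auto simp: wf_word_def inv_word_def)

lemma pres_eq_wf: "pres_eq gens R u w \<Longrightarrow> wf_word gens u \<and> wf_word gens w"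
  by (induction rule: pres_eq.induct) auto

lemma pres_eq_appL: "pres_eq gens R u u' \<Longrightarrow> wf_word gens w \<Longrightarrow> pres_eq gens R (w@u) (w@u')"
proof (induction rule: pres_eq.induct)
  case (refl x) thus ?case by (auto intro: pres_eq.refl)
next
  case (sym u w') show ?case using sym.IH[OF sym.prems] by (rule pres_eq.sym)
next
  case (trans u1 v1 w1)
  from trans.IH(1)[OF trans.prems] trans.IH(2)[OF trans.prems] show ?case by (rule pres_eq.trans)
next
  case (cancel u v x e)
  thus ?case using pres_eq.cancel[where u="w@u" and v=v and x=x and e=e and gens=gens and R=R] by simp
next
  case (rel l r u v)
  thus ?case using pres_eq.rel[where u="w@u" and v=v and l=l and r=r and gens=gens and R=R] by simp
qed

lemma pres_eq_appR: "pres_eq gens R u u' \<Longrightarrow> wf_word gens w \<Longrightarrow> pres_eq gens R (u@w) (u'@w)"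
proof (induction rule: pres_eq.induct)
  case (refl x) thus ?case by (auto intro: pres_eq.refl)
next
  case (sym u w') show ?case using sym.IH[OF sym.prems] by (rule pres_eq.sym)
next
  case (trans u1 v1 w1)
  from trans.IH(1)[OF trans.prems] trans.IH(2)[OF trans.prems] show ?case by (rule pres_eq.trans)
next
  case (cancel u v x e)
  thus ?case using pres_eq.cancel[where u="u" and v="v@w" and x=x and e=e and gens=gens and R=R] by simp
next
  case (rel l r u v)
  thus ?case using pres_eq.rel[where u="u" and v="v@w" and l=l and r=r and gens=gens and R=R] by simp
qed

lemma pres_eq_app: "pres_eq gens R u u' \<Longrightarrow> pres_eq gens R w w' \<Longrightarrow> pres_eq gens R (u@w) (u'@w')"
proof -
  assume a: "pres_eq gens R u u'" "pres_eq gens R w w'"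
  have 1: "pres_eq gens R (u@w) (u'@w)" using a pres_eq_wf[OF a(2)] by (intro pres_eq_appR) auto
  have 2: "pres_eq gens R (u'@w) (u'@w')" using a pres_eq_wf[OF a(1)] by (intro pres_eq_appL) auto
  show ?thesis using 1 2 by (rule pres_eq.trans)
qed

lemma pres_eq_inv_cancel:
  assumes "wf_word gens w"
  shows "pres_eq gens R (w @ inv_word w) []" "pres_eq gens R (inv_word w @ w) []"
  using assms
proof (induction w)
  case Nil
  { case 1 thus ?case by (simp add: pres_eq.refl) next
    case 2 thus ?case by (simp add: pres_eq.refl) }
next
  case (Cons a w)
  obtain x e where a: "a = (x,e)" by force
  { case 1
    then have wf: "wf_word gens w" "x \<in> gens" using a by auto
    have "pres_eq gens R ([(x,e)] @ (w @ inv_word w) @ [(x,\<not>e)]) ([(x,e)] @ [] @ [(x,\<not>e)])"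
      using Cons.IH(1)[OF wf(1)] wf by (intro pres_eq_app pres_eq.refl) auto
    moreover have "pres_eq gens R ([] @ [(x,e),(x,\<not>e)] @ []) ([] @ [])"
      using wf by (intro pres_eq.cancel) auto
    ultimately have "pres_eq gens R ([(x,e)] @ (w @ inv_word w) @ [(x,\<not>e)]) []"
      by simp (rule pres_eq.trans)
    then show ?case using a by simp
  next
    case 2
    then have wf: "wf_word gens w" "x \<in> gens" using a by auto
    have "pres_eq gens R (inv_word w @ [(x,\<not>e),(x,\<not>\<not>e)] @ w) (inv_word w @ w)"
      using wf by (intro pres_eq.cancel) auto
    then have "pres_eq gens R (inv_word w @ [(x,\<not>e),(x,e)] @ w) []"
      using Cons.IH(2)[OF wf(1)] by simp (rule pres_eq.trans)
    then show ?case using a by simp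
  }
qed

lemma cls_eq_iff:
  assumes "wf_word gens u"
  shows "pres_class gens R u = pres_class gens R w \<longleftrightarrow> pres_eq gens R u w"
proof
  assume "pres_class gens R u = pres_class gens R w"
  moreover have "u \<in> pres_class gens R u" using assms by (simp add: pres_class_def pres_eq.refl)
  ultimately have "pres_eq gens R w u" by (auto simp: pres_class_def)
  then show "pres_eq gens R u w" by (rule pres_eq.sym)
next
  assume "pres_eq gens R u w"
  then show "pres_class gens R u = pres_class gens R w"
    unfolding pres_class_def
  proof (intro Collect_cong iffI)
    fix x assume h: "pres_eq gens R u w" "pres_eq gens R u x"
    show "pres_eq gens R w x" using pres_eq.sym[OF h(1)] h(2) by (rule pres_eq.trans)
  next
    fix x assume h: "pres_eq gens R u w" "pres_eq gens R w x"
    show "pres_eq gens R u x" using h by (rule pres_eq.trans)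
  qed
qed

lemma some_cls:
  assumes "wf_word gens u"
  shows "pres_eq gens R u (SOME a. a \<in> pres_class gens R u)"
proof -
  have "u \<in> pres_class gens R u" using assms by (simp add: pres_class_def pres_eq.refl)
  then have "(SOME a. a \<in> pres_class gens R u) \<in> pres_class gens R u" by (rule someI)
  then show ?thesis by (simp add: pres_class_def)
qed

lemma PG_carrier: "carrier (presented_group gens R) = pres_class gens R ` {w. wf_word gens w}"
  by (simp add: presented_group_def)

lemma PG_one: "\<one>\<^bsub>presented_group gens R\<^esub> = pres_class gens R []"
  by (simp add: presented_group_def)

lemma PG_mult:
  assumes "wf_word gens u" "wf_word gens w"
  shows "pres_class gens R u \<otimes>\<^bsub>presented_group gens R\<^esub> pres_class gens R w = pres_class gens R (u @ w)"
proof -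
  have "pres_eq gens R (u@w) ((SOME a. a \<in> pres_class gens R u) @ (SOME a. a \<in> pres_class gens R w))"
    using assms by (intro pres_eq_app some_cls)
  then show ?thesis using assms
    by (simp add: presented_group_def cls_eq_iff[symmetric])
qed

lemma cls_carrier: "wf_word gens u \<Longrightarrow> pres_class gens R u \<in> carrier (presented_group gens R)"
  by (simp add: PG_carrier)

lemma PG_group: "group (presented_group gens R)"
proof (rule groupI)
  fix x y assume "x \<in> carrier (presented_group gens R)" "y \<in> carrier (presented_group gens R)"
  then show "x \<otimes>\<^bsub>presented_group gens R\<^esub> y \<in> carrier (presented_group gens R)"
    by (auto simp: PG_carrier PG_mult)
next
  show "\<one>\<^bsub>presented_group gens R\<^esub> \<in> carrier (presented_group gens R)"
    by (simp add: PG_one PG_carrier)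
next
  fix x y z assume "x \<in> carrier (presented_group gens R)" "y \<in> carrier (presented_group gens R)"
    "z \<in> carrier (presented_group gens R)"
  then show "x \<otimes>\<^bsub>presented_group gens R\<^esub> y \<otimes>\<^bsub>presented_group gens R\<^esub> z =
    x \<otimes>\<^bsub>presented_group gens R\<^esub> (y \<otimes>\<^bsub>presented_group gens R\<^esub> z)"
    by (auto simp: PG_carrier PG_mult)
next
  fix x assume "x \<in> carrier (presented_group gens R)"
  then show "\<one>\<^bsub>presented_group gens R\<^esub> \<otimes>\<^bsub>presented_group gens R\<^esub> x = x"
    by (auto simp: PG_carrier PG_mult PG_one)
next
  fix x assume "x \<in> carrier (presented_group gens R)"
  then obtain u where u: "wf_word gens u" "x = pres_class gens R u" by (auto simp: PG_carrier)
  have "pres_class gens R (inv_word u) \<otimes>\<^bsub>presented_group gens R\<^esub> x = \<one>\<^bsub>presented_group gens R\<^esub>"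
    using u pres_eq_inv_cancel(2)[OF u(1)] by (simp add: PG_mult PG_one cls_eq_iff)
  moreover have "pres_class gens R (inv_word u) \<in> carrier (presented_group gens R)"
    using u by (simp add: cls_carrier)
  ultimately show "\<exists>y\<in>carrier (presented_group gens R). y \<otimes>\<^bsub>presented_group gens R\<^esub> x = \<one>\<^bsub>presented_group gens R\<^esub>"
    by blast
qed

section \<open>Substitution homomorphisms\<close>

lemma wf_wsubst:
  assumes "\<forall>x\<in>gens. wf_word gens' (f x)" "wf_word gens w"
  shows "wf_word gens' (wsubst f w)"
  using assms(2) by (induction w) (auto simp: assms(1))

lemma pres_eq_wsubst:
  assumes f_wf: "\<forall>x\<in>gens. wf_word gens' (f x)"
    and f_rel: "\<forall>(l,r)\<in>R. pres_eq gens' R' (wsubst f l) (wsubst f r)"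
  shows "pres_eq gens R u w \<Longrightarrow> pres_eq gens' R' (wsubst f u) (wsubst f w)"
proof (induction rule: pres_eq.induct)
  case (refl w) thus ?case using f_wf by (intro pres_eq.refl wf_wsubst)
next
  case (sym u w) show ?case using sym.IH by (rule pres_eq.sym)
next
  case (trans u v w) show ?case using trans.IH by (rule pres_eq.trans)
next
  case (cancel u v x e)
  have wx: "wf_word gens' (f x)" using f_wf cancel by auto
  have wu: "wf_word gens' (wsubst f u)" "wf_word gens' (wsubst f v)"
    using cancel f_wf by (auto intro: wf_wsubst)
  have "pres_eq gens' R' ((if e then inv_word (f x) else f x) @ (if \<not>e then inv_word (f x) else f x)) []"
    using pres_eq_inv_cancel[OF wx] by auto
  then have "pres_eq gens' R' (wsubst f u @ ((if e then inv_word (f x) else f x) @ (if \<not>e then inv_word (f x) else f x)) @ wsubst f v)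
     (wsubst f u @ [] @ wsubst f v)"
    using wu by (intro pres_eq_app pres_eq.refl)
  then show ?case by simp
next
  case (rel l r u v)
  have wu: "wf_word gens' (wsubst f u)" "wf_word gens' (wsubst f v)"
    using rel f_wf by (auto intro: wf_wsubst)
  have "pres_eq gens' R' (wsubst f l) (wsubst f r)" using f_rel rel by auto
  then show ?case using wu by (simp, intro pres_eq_app pres_eq.refl) auto
qed

definition shom :: "'a set \<Rightarrow> ('a word \<times> 'a word) set \<Rightarrow> 'b set \<Rightarrow> ('b word \<times> 'b word) set
   \<Rightarrow> ('a \<Rightarrow> 'b word) \<Rightarrow> 'a word set \<Rightarrow> 'b word set" where
  "shom gens R gens' R' f A = pres_class gens' R' (wsubst f (SOME a. a \<in> A))"

lemma shom_cls:
  assumes f_wf: "\<forall>x\<in>gens. wf_word gens' (f x)"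
    and f_rel: "\<forall>(l,r)\<in>R. pres_eq gens' R' (wsubst f l) (wsubst f r)"
    and w: "wf_word gens w"
  shows "shom gens R gens' R' f (pres_class gens R w) = pres_class gens' R' (wsubst f w)"
proof -
  have h: "pres_eq gens' R' (wsubst f w) (wsubst f (SOME a. a \<in> pres_class gens R w))"
    by (rule pres_eq_wsubst[OF f_wf f_rel some_cls[OF w]])
  show ?thesis unfolding shom_def
    using pres_eq_wf[OF h] pres_eq.sym[OF h] by (subst cls_eq_iff) auto
qed

lemma shom_hom:
  assumes f_wf: "\<forall>x\<in>gens. wf_word gens' (f x)"
    and f_rel: "\<forall>(l,r)\<in>R. pres_eq gens' R' (wsubst f l) (wsubst f r)"
  shows "shom gens R gens' R' f \<in> hom (presented_group gens R) (presented_group gens' R')"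
proof (rule homI)
  fix x assume "x \<in> carrier (presented_group gens R)"
  then obtain u where u: "wf_word gens u" "x = pres_class gens R u" by (auto simp: PG_carrier)
  show "shom gens R gens' R' f x \<in> carrier (presented_group gens' R')"
    using u f_wf by (simp add: shom_cls[OF f_wf f_rel] cls_carrier wf_wsubst)
next
  fix x y assume "x \<in> carrier (presented_group gens R)" "y \<in> carrier (presented_group gens R)"
  then obtain u w where u: "wf_word gens u" "x = pres_class gens R u"
    and w: "wf_word gens w" "y = pres_class gens R w" by (auto simp: PG_carrier)
  show "shom gens R gens' R' f (x \<otimes>\<^bsub>presented_group gens R\<^esub> y) =
    shom gens R gens' R' f x \<otimes>\<^bsub>presented_group gens' R'\<^esub> shom gens R gens' R' f y"
    using u w f_wf by (simp add: PG_mult shom_cls[OF f_wf f_rel] wf_wsubst)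
qed

lemma wsubst_id: "wsubst (\<lambda>x. [(x,False)]) w = w"
  by (induction w) auto

lemma wsubst_near_id:
  assumes F: "\<forall>x\<in>gens. pres_eq gens R (F x) [(x,False)]"
  shows "wf_word gens w \<Longrightarrow> pres_eq gens R (wsubst F w) w"
proof (induction w)
  case Nil thus ?case by (simp add: pres_eq.refl)
next
  case (Cons a w)
  obtain x e where a: "a = (x,e)" by force
  have x: "x \<in> gens" "wf_word gens w" using Cons a by auto
  have Fx: "pres_eq gens R (F x) [(x,False)]" using F x by auto
  have wFx: "wf_word gens (F x)" using pres_eq_wf[OF Fx] by simp
  have "pres_eq gens R (if e then inv_word (F x) else F x) [(x,e)]"
  proof (cases e)
    case True
    have "pres_eq gens R (inv_word (F x) @ [(x,False),(x,\<not>False)] @ []) (inv_word (F x) @ [])"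
      using x wFx by (intro pres_eq.cancel) auto
    then have 1: "pres_eq gens R (inv_word (F x)) (inv_word (F x) @ [(x,False)] @ [(x,True)])"
      by (auto dest: pres_eq.sym)
    have 2: "pres_eq gens R (inv_word (F x) @ [(x,False)] @ [(x,True)]) (inv_word (F x) @ F x @ [(x,True)])"
      using pres_eq.sym[OF Fx] x wFx by (intro pres_eq_app pres_eq.refl) auto
    have 3: "pres_eq gens R ((inv_word (F x) @ F x) @ [(x,True)]) ([] @ [(x,True)])"
      using x wFx by (intro pres_eq_app pres_eq.refl pres_eq_inv_cancel) auto
    show ?thesis using pres_eq.trans[OF pres_eq.trans[OF 1 2]] 3 True by simp
  next
    case False thus ?thesis using Fx by simp
  qed
  then have "pres_eq gens R ((if e then inv_word (F x) else F x) @ wsubst F w) ([(x,e)] @ w)"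
    using Cons x by (intro pres_eq_app) auto
  then show ?case using a by simp
qed



locale vgrp = group G for G (structure) +
  fixes n :: nat and V :: "nat \<Rightarrow> 'g"
  assumes V_carr[simp]: "V i \<in> carrier G"
  and V_inv: "1 \<le> i \<Longrightarrow> Suc i \<le> n \<Longrightarrow> V i \<otimes> V i = \<one>"
  and V_comm: "1 \<le> i \<Longrightarrow> Suc (Suc i) \<le> j \<Longrightarrow> Suc j \<le> n \<Longrightarrow> V i \<otimes> V j = V j \<otimes> V i"
  and V_braid: "1 \<le> i \<Longrightarrow> Suc (Suc i) \<le> n \<Longrightarrow> V i \<otimes> V (Suc i) \<otimes> V i = V (Suc i) \<otimes> V i \<otimes> V (Suc i)"
begin

definition cv :: "nat \<Rightarrow> 'g \<Rightarrow> 'g" where "cv i x = V i \<otimes> x \<otimes> V i"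

lemma cv_carr[simp]: "x \<in> carrier G \<Longrightarrow> cv i x \<in> carrier G"
  by (simp add: cv_def)

lemma cv_cv: "1 \<le> i \<Longrightarrow> i+1 \<le> n \<Longrightarrow> x \<in> carrier G \<Longrightarrow> cv i (cv i x) = x"
proof -
  assume a: "1 \<le> i" "i+1 \<le> n" "x \<in> carrier G"
  have "cv i (cv i x) = (V i \<otimes> V i) \<otimes> x \<otimes> (V i \<otimes> V i)"
    using a by (simp add: cv_def m_assoc)
  also have "\<dots> = x" using a by (simp add: V_inv)
  finally show ?thesis .
qed

lemma cv_mult: "1 \<le> i \<Longrightarrow> i+1 \<le> n \<Longrightarrow> x \<in> carrier G \<Longrightarrow> y \<in> carrier G \<Longrightarrow>
   cv i (x \<otimes> y) = cv i x \<otimes> cv i y"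
proof -
  assume a: "1 \<le> i" "i+1 \<le> n" "x \<in> carrier G" "y \<in> carrier G"
  have "cv i x \<otimes> cv i y = V i \<otimes> x \<otimes> (V i \<otimes> V i) \<otimes> y \<otimes> V i"
    using a by (simp add: cv_def m_assoc)
  also have "\<dots> = cv i (x \<otimes> y)" using a by (simp add: V_inv cv_def m_assoc)
  finally show ?thesis by simp
qed

lemma cv_one: "1 \<le> i \<Longrightarrow> i+1 \<le> n \<Longrightarrow> cv i \<one> = \<one>"
  by (simp add: cv_def V_inv)

lemma cv_fix_iff: "1 \<le> i \<Longrightarrow> i+1 \<le> n \<Longrightarrow> x \<in> carrier G \<Longrightarrow> cv i x = x \<longleftrightarrow> V i \<otimes> x = x \<otimes> V i"
proof -
  assume a: "1 \<le> i" "i+1 \<le> n" "x \<in> carrier G"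
  have "cv i x \<otimes> V i = V i \<otimes> x" using a by (simp add: cv_def m_assoc V_inv)
  then show ?thesis using a
    by (metis V_carr cv_carr m_closed right_cancel)
qed

lemma fix_of_comm: "1 \<le> j \<Longrightarrow> j+1 \<le> n \<Longrightarrow> x \<in> carrier G \<Longrightarrow> x \<otimes> V j = V j \<otimes> x \<Longrightarrow> cv j x = x"
proof -
  assume a: "1 \<le> j" "j+1 \<le> n" "x \<in> carrier G" "x \<otimes> V j = V j \<otimes> x"
  have "cv j x = V j \<otimes> (x \<otimes> V j)" using a(3) by (simp add: cv_def m_assoc)
  also have "\<dots> = V j \<otimes> (V j \<otimes> x)" by (simp only: a(4))
  also have "\<dots> = (V j \<otimes> V j) \<otimes> x" using a(3) by (simp add: m_assoc)
  also have "\<dots> = x" using a by (simp add: V_inv)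
  finally show ?thesis .
qed

lemma cv_V_comm: "1 \<le> i \<Longrightarrow> i+2 \<le> j \<Longrightarrow> j+1 \<le> n \<Longrightarrow> cv i (V j) = V j"
  by (subst cv_fix_iff) (auto intro: V_comm)

lemma cv_V_comm': "1 \<le> i \<Longrightarrow> i+2 \<le> j \<Longrightarrow> j+1 \<le> n \<Longrightarrow> cv j (V i) = V i"
  by (subst cv_fix_iff) (auto intro: V_comm[symmetric])

lemma cv_comm: "1 \<le> i \<Longrightarrow> i+2 \<le> j \<Longrightarrow> j+1 \<le> n \<Longrightarrow> x \<in> carrier G \<Longrightarrow>
  cv i (cv j x) = cv j (cv i x)"
proof -
  assume a: "1 \<le> i" "i+2 \<le> j" "j+1 \<le> n" "x \<in> carrier G"
  have "cv i (cv j x) = (V i \<otimes> V j) \<otimes> x \<otimes> (V j \<otimes> V i)" using a by (simp add: cv_def m_assoc)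
  also have "\<dots> = (V j \<otimes> V i) \<otimes> x \<otimes> (V i \<otimes> V j)" using a V_comm[of i j] by simp
  also have "\<dots> = cv j (cv i x)" using a by (simp add: cv_def m_assoc)
  finally show ?thesis .
qed

lemma comm':
  "1 \<le> i \<Longrightarrow> i+2 \<le> j \<Longrightarrow> j+1 \<le> n \<Longrightarrow> x \<in> carrier G \<Longrightarrow> cv j (cv i x) = cv i (cv j x)"
  using cv_comm[of i j x] by metis

lemma cv_braid: "1 \<le> i \<Longrightarrow> i+2 \<le> n \<Longrightarrow> x \<in> carrier G \<Longrightarrow>
  cv i (cv (i+1) (cv i x)) = cv (i+1) (cv i (cv (i+1) x))"
proof -
  assume a: "1 \<le> i" "i+2 \<le> n" "x \<in> carrier G"
  have "cv i (cv (i+1) (cv i x)) = (V i \<otimes> V (i+1) \<otimes> V i) \<otimes> x \<otimes> (V i \<otimes> V (i+1) \<otimes> V i)"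
    using a by (simp add: cv_def m_assoc)
  also have "\<dots> = (V (i+1) \<otimes> V i \<otimes> V (i+1)) \<otimes> x \<otimes> (V (i+1) \<otimes> V i \<otimes> V (i+1))"
    using a V_braid[of i] by simp
  also have "\<dots> = cv (i+1) (cv i (cv (i+1) x))" using a by (simp add: cv_def m_assoc)
  finally show ?thesis .
qed

lemma braid':
  "1 \<le> p \<Longrightarrow> q = p+1 \<Longrightarrow> q+1 \<le> n \<Longrightarrow> x \<in> carrier G \<Longrightarrow> cv p (cv q (cv p x)) = cv q (cv p (cv q x))"
  using cv_braid[of p x] by simp

lemma cv_eq_conj:
  "1 \<le> k \<Longrightarrow> k+1 \<le> n \<Longrightarrow> x \<in> carrier G \<Longrightarrow> y \<in> carrier G \<Longrightarrow> x \<otimes> y = y \<otimes> x \<Longrightarrow>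
   cv k x \<otimes> cv k y = cv k y \<otimes> cv k x"
  by (metis cv_mult)

lemma cv_braid_conj:
  "1 \<le> k \<Longrightarrow> k+1 \<le> n \<Longrightarrow> x \<in> carrier G \<Longrightarrow> y \<in> carrier G \<Longrightarrow> x \<otimes> y \<otimes> x = y \<otimes> x \<otimes> y \<Longrightarrow>
   cv k x \<otimes> cv k y \<otimes> cv k x = cv k y \<otimes> cv k x \<otimes> cv k y"
  by (metis cv_mult m_closed)

fun Tr :: "'g \<Rightarrow> nat \<Rightarrow> 'g" where
  "Tr x 0 = x"
| "Tr x (Suc i) = cv (Suc i) (cv (Suc (Suc i)) (Tr x i))"

fun Br :: "'g \<Rightarrow> nat \<Rightarrow> 'g" where
  "Br x 0 = x"
| "Br x (Suc i) = cv (Suc i) (Br x i)"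

lemma Tr_carr[simp]: "x \<in> carrier G \<Longrightarrow> Tr x i \<in> carrier G"
  by (induction i) auto

lemma Br_carr[simp]: "x \<in> carrier G \<Longrightarrow> Br x i \<in> carrier G"
  by (induction i) auto

definition prodV :: "nat list \<Rightarrow> 'g" where
  "prodV ks = foldr (\<lambda>k acc. V k \<otimes> acc) ks \<one>"

lemma prodV_carr[simp]: "prodV ks \<in> carrier G"
  by (induction ks) (auto simp: prodV_def)

lemma prodV_Cons: "prodV (k # ks) = V k \<otimes> prodV ks"
  by (simp add: prodV_def)

lemma prodV_Nil: "prodV [] = \<one>"
  by (simp add: prodV_def)

lemma prodV_append: "prodV (xs @ ys) = prodV xs \<otimes> prodV ys"
  by (induction xs) (auto simp: prodV_Cons prodV_Nil m_assoc)

lemma prodV_comm: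
  assumes "\<forall>m\<in>set ks. 1 \<le> m \<and> m+2 \<le> j" "j+1 \<le> n"
  shows "prodV ks \<otimes> V j = V j \<otimes> prodV ks"
  using assms(1)
proof (induction ks)
  case Nil thus ?case by (simp add: prodV_def)
next
  case (Cons k ks)
  have "prodV (k#ks) \<otimes> V j = V k \<otimes> (prodV ks \<otimes> V j)" by (simp add: prodV_Cons m_assoc)
  also have "\<dots> = (V k \<otimes> V j) \<otimes> prodV ks" using Cons by (simp add: m_assoc)
  also have "\<dots> = V j \<otimes> prodV (k#ks)" using Cons assms(2) V_comm[of k j] by (simp add: prodV_Cons m_assoc)
  finally show ?case .
qed

definition sigw :: "'g \<Rightarrow> nat \<Rightarrow> 'g" where
  "sigw x i = prodV (rev [1..<i+1]) \<otimes> prodV (rev [2..<i+2]) \<otimes> x \<otimes> prodV [2..<i+2] \<otimes> prodV [1..<i+1]"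

definition barw :: "'g \<Rightarrow> nat \<Rightarrow> 'g" where
  "barw x i = prodV (rev [1..<i+1]) \<otimes> x \<otimes> prodV [1..<i+1]"

lemma sigw_Tr: "x \<in> carrier G \<Longrightarrow> i+2 \<le> n \<Longrightarrow> sigw x i = Tr x i"
proof (induction i)
  case 0 thus ?case by (simp add: sigw_def prodV_def)
next
  case (Suc i)
  define A where "A = prodV (rev [1..<i+1])"
  define B where "B = prodV (rev [2..<i+2])"
  define B' where "B' = prodV [2..<i+2]"
  define A' where "A' = prodV [1..<i+1]"
  have carr: "A \<in> carrier G" "B \<in> carrier G" "A' \<in> carrier G" "B' \<in> carrier G"
    by (auto simp: A_def B_def A'_def B'_def)
  have cA: "A \<otimes> V (Suc (Suc i)) = V (Suc (Suc i)) \<otimes> A" unfolding A_def using Suc.prems by (intro prodV_comm) auto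
  have cA': "A' \<otimes> V (Suc (Suc i)) = V (Suc (Suc i)) \<otimes> A'" unfolding A'_def using Suc.prems by (intro prodV_comm) auto
  have e1: "prodV (rev [1..<Suc i+1]) = V (i+1) \<otimes> A" by (simp add: A_def prodV_Cons)
  have e2: "prodV (rev [2..<Suc i+2]) = V (i+2) \<otimes> B" by (simp add: B_def prodV_Cons)
  have e3: "prodV [2..<Suc i+2] = B' \<otimes> V (i+2)" by (simp add: B'_def prodV_append prodV_Cons prodV_Nil)
  have e4: "prodV [1..<Suc i+1] = A' \<otimes> V (i+1)" by (simp add: A'_def prodV_append prodV_Cons prodV_Nil)
  have "sigw x (Suc i) = V (i+1) \<otimes> (A \<otimes> V (Suc (Suc i))) \<otimes> B \<otimes> x \<otimes> B' \<otimes> (V (Suc (Suc i)) \<otimes> A') \<otimes> V (i+1)"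
    unfolding sigw_def e1 e2 e3 e4 using carr Suc.prems by (simp add: m_assoc)
  also have "\<dots> = V (i+1) \<otimes> (V (Suc (Suc i)) \<otimes> A) \<otimes> B \<otimes> x \<otimes> B' \<otimes> (A' \<otimes> V (Suc (Suc i))) \<otimes> V (i+1)"
    by (simp only: cA cA')
  also have "\<dots> = cv (i+1) (cv (i+2) (sigw x i))"
    unfolding sigw_def cv_def A_def[symmetric] B_def[symmetric] A'_def[symmetric] B'_def[symmetric]
    using carr Suc.prems by (simp add: m_assoc)
  also have "\<dots> = Tr x (Suc i)" using Suc by simp
  finally show ?case .
qed

lemma barw_Br: "x \<in> carrier G \<Longrightarrow> barw x i = Br x i"
proof (induction i)
  case 0 thus ?case by (simp add: barw_def prodV_def)
next
  case (Suc i)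
  have e1: "prodV (rev [1..<Suc i+1]) = V (i+1) \<otimes> prodV (rev [1..<i+1])" by (simp add: prodV_Cons)
  have e4: "prodV [1..<Suc i+1] = prodV [1..<i+1] \<otimes> V (i+1)" by (simp add: prodV_append prodV_Cons prodV_Nil)
  have "barw x (Suc i) = cv (i+1) (barw x i)"
    unfolding barw_def e1 e4 cv_def using Suc.prems by (simp add: m_assoc)
  then show ?case using Suc by simp
qed

end

locale redgrp = vgrp +
  fixes \<sigma> \<beta>
  assumes sig_carr[simp]: "\<sigma> \<in> carrier G" and bet_carr[simp]: "\<beta> \<in> carrier G"
  and n4: "4 \<le> n"
  and R1: "3 \<le> j \<Longrightarrow> j+1 \<le> n \<Longrightarrow> cv j \<sigma> = \<sigma>"
  and R2: "\<beta> \<otimes> \<beta> = \<one>"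
  and R3: "2 \<le> j \<Longrightarrow> j+1 \<le> n \<Longrightarrow> cv j \<beta> = \<beta>"
  and R4: "cv 1 \<sigma> \<otimes> cv 2 \<sigma> \<otimes> cv 1 \<sigma> = cv 2 \<sigma> \<otimes> cv 1 \<sigma> \<otimes> cv 2 \<sigma>"
  and R5: "\<sigma> \<otimes> cv 2 (cv 3 (cv 1 (cv 2 \<sigma>))) = cv 2 (cv 3 (cv 1 (cv 2 \<sigma>))) \<otimes> \<sigma>"
  and R6: "\<beta> \<otimes> cv 1 \<beta> = cv 1 \<beta> \<otimes> \<beta>"
  and R7: "\<sigma> \<otimes> cv 2 (cv 1 \<beta>) = cv 2 (cv 1 \<beta>) \<otimes> \<sigma>"
  and R8: "cv 1 \<beta> \<otimes> \<beta> \<otimes> \<sigma> \<otimes> \<beta> \<otimes> cv 1 \<beta> = cv 1 \<sigma>"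
begin

abbreviation "T \<equiv> Tr \<sigma>"
abbreviation "P \<equiv> Br \<beta>"

lemma C1: "i+3 \<le> j \<Longrightarrow> j+1 \<le> n \<Longrightarrow> cv j (T i) = T i"
proof (induction i)
  case 0 thus ?case using R1[of j] by simp
next
  case (Suc i)
  have "cv j (T (Suc i)) = cv (Suc i) (cv (Suc (Suc i)) (cv j (T i)))"
    using comm'[of "Suc i" j] comm'[of "Suc (Suc i)" j] Suc.prems by simp
  then show ?case using Suc by simp
qed

lemma C2_step:
  assumes "1 \<le> p" "q = p+1" "r = q+1" "r+1 \<le> n" "t \<in> carrier G" "cv r t = t"
  shows "cv p (cv q (cv r (cv p (cv q t)))) = cv q (cv r (cv p (cv q t)))"
proof -
  have 1: "cv r (cv p (cv q t)) = cv p (cv r (cv q t))" using assms by (intro comm') auto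
  have 2: "cv p (cv q (cv p (cv r (cv q t)))) = cv q (cv p (cv q (cv r (cv q t))))"
    using assms by (intro braid') auto
  have 3: "cv q (cv r (cv q t)) = cv r (cv q (cv r t))" using assms by (intro braid') auto
  have 4: "cv p (cv r (cv q t)) = cv r (cv p (cv q t))" using assms by (intro comm'[symmetric]) auto
  have "cv p (cv q (cv r (cv p (cv q t)))) = cv p (cv q (cv p (cv r (cv q t))))" by (simp only: 1)
  also have "\<dots> = cv q (cv p (cv q (cv r (cv q t))))" by (rule 2)
  also have "\<dots> = cv q (cv p (cv r (cv q (cv r t))))" by (simp only: 3)
  also have "\<dots> = cv q (cv p (cv r (cv q t)))" by (simp only: assms(6))
  also have "\<dots> = cv q (cv r (cv p (cv q t)))" by (simp only: 4)
  finally show ?thesis .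
qed

lemma C2: "1 \<le> j \<Longrightarrow> j+1 \<le> i \<Longrightarrow> i+2 \<le> n \<Longrightarrow> cv j (T i) = T i"
proof (induction i arbitrary: j)
  case 0 thus ?case by simp
next
  case (Suc i)
  show ?case
  proof (cases "j < i")
    case True
    have "cv j (T (Suc i)) = cv (Suc i) (cv (Suc (Suc i)) (cv j (T i)))"
      using comm'[of j "Suc i"] comm'[of j "Suc (Suc i)"] Suc.prems True by simp
    then show ?thesis using Suc True by simp
  next
    case False
    then have ji: "j = i" using Suc.prems by simp
    then obtain k where k: "i = Suc k" using Suc.prems by (cases i) auto
    have "cv (Suc k) (cv (Suc (Suc k)) (cv (Suc (Suc (Suc k))) (cv (Suc k) (cv (Suc (Suc k)) (T k)))))
       = cv (Suc (Suc k)) (cv (Suc (Suc (Suc k))) (cv (Suc k) (cv (Suc (Suc k)) (T k))))"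
      using Suc.prems k C1[of k "Suc (Suc (Suc k))"] by (intro C2_step) auto
    then show ?thesis using ji k by simp
  qed
qed

lemma T_braid: "i+3 \<le> n \<Longrightarrow> T i \<otimes> T (Suc i) \<otimes> T i = T (Suc i) \<otimes> T i \<otimes> T (Suc i)"
proof (induction i)
  case 0
  have "cv 1 (cv 1 \<sigma>) \<otimes> cv 1 (cv 2 \<sigma>) \<otimes> cv 1 (cv 1 \<sigma>) = cv 1 (cv 2 \<sigma>) \<otimes> cv 1 (cv 1 \<sigma>) \<otimes> cv 1 (cv 2 \<sigma>)"
    using R4 n4 by (intro cv_braid_conj) auto
  then show ?case using n4 by (simp add: cv_cv numeral_eq_Suc)
next
  case (Suc i)
  let ?f = "\<lambda>x. cv (Suc i) (cv (Suc (Suc i)) (cv (Suc (Suc (Suc i))) x))"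
  have "?f (T i) \<otimes> ?f (T (Suc i)) \<otimes> ?f (T i) = ?f (T (Suc i)) \<otimes> ?f (T i) \<otimes> ?f (T (Suc i))"
    using Suc by (intro cv_braid_conj) auto
  moreover have "?f (T i) = T (Suc i)" using C1[of i "Suc (Suc (Suc i))"] Suc.prems by simp
  moreover have "?f (T (Suc i)) = T (Suc (Suc i))"
  proof -
    have "?f (T (Suc i)) = cv (Suc i) (T (Suc (Suc i)))" by simp
    also have "\<dots> = T (Suc (Suc i))" using Suc.prems by (intro C2) auto
    finally show ?thesis .
  qed
  ultimately show ?case by simp
qed

lemma T_comm0: "2 \<le> j \<Longrightarrow> j+2 \<le> n \<Longrightarrow> \<sigma> \<otimes> T j = T j \<otimes> \<sigma>"
proof (induction j)
  case 0 thus ?case by simp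
next
  case (Suc j)
  show ?case
  proof (cases "j = 1")
    case True thus ?thesis using R5 by (simp add: numeral_eq_Suc)
  next
    case False
    then have j2: "2 \<le> j" using Suc.prems by simp
    have "cv (Suc j) (cv (Suc (Suc j)) \<sigma>) \<otimes> cv (Suc j) (cv (Suc (Suc j)) (T j))
      = cv (Suc j) (cv (Suc (Suc j)) (T j)) \<otimes> cv (Suc j) (cv (Suc (Suc j)) \<sigma>)"
      using Suc j2 by (intro cv_eq_conj) auto
    moreover have "cv (Suc j) (cv (Suc (Suc j)) \<sigma>) = \<sigma>" using R1 j2 Suc.prems by simp
    ultimately show ?thesis by simp
  qed
qed

lemma T_comm: "i+2 \<le> j \<Longrightarrow> j+2 \<le> n \<Longrightarrow> T i \<otimes> T j = T j \<otimes> T i"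
proof (induction i arbitrary: j)
  case 0 thus ?case using T_comm0 by simp
next
  case (Suc i)
  have "cv (Suc i) (cv (Suc (Suc i)) (T i)) \<otimes> cv (Suc i) (cv (Suc (Suc i)) (T j))
      = cv (Suc i) (cv (Suc (Suc i)) (T j)) \<otimes> cv (Suc i) (cv (Suc (Suc i)) (T i))"
    using Suc by (intro cv_eq_conj) auto
  moreover have "cv (Suc i) (cv (Suc (Suc i)) (T j)) = T j" using Suc.prems C2 by simp
  ultimately show ?case by simp
qed

lemma P_inv: "i+1 \<le> n \<Longrightarrow> P i \<otimes> P i = \<one>"
proof (induction i)
  case 0 thus ?case using R2 by simp
next
  case (Suc i)
  then show ?case using cv_mult[of "Suc i" "P i" "P i"] cv_one[of "Suc i"] by simp
qed

lemma C3a: "i+2 \<le> j \<Longrightarrow> j+1 \<le> n \<Longrightarrow> cv j (P i) = P i"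
proof (induction i)
  case 0 thus ?case using R3[of j] by simp
next
  case (Suc i)
  have "cv j (P (Suc i)) = cv (Suc i) (cv j (P i))"
    using comm'[of "Suc i" j] Suc.prems by simp
  then show ?case using Suc by simp
qed

lemma C3b: "1 \<le> j \<Longrightarrow> j+1 \<le> i \<Longrightarrow> i+1 \<le> n \<Longrightarrow> cv j (P i) = P i"
proof (induction i arbitrary: j)
  case 0 thus ?case by simp
next
  case (Suc i)
  show ?case
  proof (cases "j < i")
    case True
    have "cv j (P (Suc i)) = cv (Suc i) (cv j (P i))"
      using comm'[of j "Suc i"] Suc.prems True by simp
    then show ?thesis using Suc True by simp
  next
    case False
    then have ji: "j = i" using Suc.prems by simp
    then obtain k where k: "i = Suc k" using Suc.prems by (cases i) auto
    have "cv (Suc k) (cv (Suc (Suc k)) (cv (Suc k) (P k))) = cv (Suc (Suc k)) (cv (Suc k) (cv (Suc (Suc k)) (P k)))"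
      using Suc.prems k by (intro braid') auto
    also have "cv (Suc (Suc k)) (P k) = P k" using Suc.prems k by (intro C3a) auto
    finally show ?thesis using ji k by simp
  qed
qed

lemma P_comm0: "1 \<le> j \<Longrightarrow> j+1 \<le> n \<Longrightarrow> \<beta> \<otimes> P j = P j \<otimes> \<beta>"
proof (induction j)
  case 0 thus ?case by simp
next
  case (Suc j)
  show ?case
  proof (cases "j = 0")
    case True thus ?thesis using R6 by simp
  next
    case False
    have "cv (Suc j) \<beta> \<otimes> cv (Suc j) (P j) = cv (Suc j) (P j) \<otimes> cv (Suc j) \<beta>"
      using Suc False by (intro cv_eq_conj) auto
    moreover have "cv (Suc j) \<beta> = \<beta>" using R3 False Suc.prems by simp
    ultimately show ?thesis by simp
  qed
qed

lemma P_comm: "i < j \<Longrightarrow> j+1 \<le> n \<Longrightarrow> P i \<otimes> P j = P j \<otimes> P i"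
proof (induction i arbitrary: j)
  case 0 thus ?case using P_comm0 by simp
next
  case (Suc i)
  have "cv (Suc i) (P i) \<otimes> cv (Suc i) (P j) = cv (Suc i) (P j) \<otimes> cv (Suc i) (P i)"
    using Suc by (intro cv_eq_conj) auto
  moreover have "cv (Suc i) (P j) = P j" using Suc.prems C3b by simp
  ultimately show ?case by simp
qed

lemma mixed_h: "k+2 \<le> n \<Longrightarrow> P k \<otimes> P (Suc k) \<otimes> T k \<otimes> P (Suc k) \<otimes> P k = cv (Suc k) (T k)"
proof (induction k)
  case 0
  have "\<beta> \<otimes> cv 1 \<beta> \<otimes> \<sigma> \<otimes> cv 1 \<beta> \<otimes> \<beta> = (\<beta> \<otimes> cv 1 \<beta>) \<otimes> \<sigma> \<otimes> (cv 1 \<beta> \<otimes> \<beta>)"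
    by (simp add: m_assoc)
  also have "\<dots> = (cv 1 \<beta> \<otimes> \<beta>) \<otimes> \<sigma> \<otimes> (\<beta> \<otimes> cv 1 \<beta>)" by (simp only: R6)
  also have "\<dots> = cv 1 \<sigma>" using R8 by (simp add: m_assoc)
  finally show ?case by simp
next
  case (Suc k)
  have k: "1 \<le> Suc k" "Suc k + 1 \<le> n" "1 \<le> Suc (Suc k)" "Suc (Suc k) + 1 \<le> n" using Suc.prems by auto
  define f where "f x = cv (Suc k) (cv (Suc (Suc k)) x)" for x
  have fm: "f (x \<otimes> y) = f x \<otimes> f y" if "x \<in> carrier G" "y \<in> carrier G" for x y
    unfolding f_def using that k by (simp add: cv_mult)
  have IH: "P k \<otimes> P (Suc k) \<otimes> T k \<otimes> P (Suc k) \<otimes> P k = cv (Suc k) (T k)"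
    using Suc.prems by (intro Suc.IH) simp
  have e: "f (P k) \<otimes> f (P (Suc k)) \<otimes> f (T k) \<otimes> f (P (Suc k)) \<otimes> f (P k) = f (cv (Suc k) (T k))"
    using arg_cong[OF IH, of f] by (simp del: Br.simps Tr.simps add: fm)
  have 1: "f (P k) = P (Suc k)" unfolding f_def using C3a[of k "Suc (Suc k)"] Suc.prems by simp
  have 2: "f (P (Suc k)) = P (Suc (Suc k))"
  proof -
    have "f (P (Suc k)) = cv (Suc k) (cv (Suc (Suc k)) (cv (Suc k) (P k)))" unfolding f_def by simp
    also have "\<dots> = cv (Suc (Suc k)) (cv (Suc k) (cv (Suc (Suc k)) (P k)))"
      by (rule braid') (use k in auto)
    also have "cv (Suc (Suc k)) (P k) = P k" using Suc.prems by (intro C3a) auto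
    finally show ?thesis by simp
  qed
  have 3: "f (T k) = T (Suc k)" unfolding f_def by simp
  have 4: "f (cv (Suc k) (T k)) = cv (Suc (Suc k)) (T (Suc k))"
    unfolding f_def Tr.simps(2) by (rule braid') (use k in auto)
  show ?case using e unfolding 1 2 3 4 .
qed

lemma PT_comm1_base: "2 \<le> i \<Longrightarrow> i+1 \<le> n \<Longrightarrow> P i \<otimes> \<sigma> = \<sigma> \<otimes> P i"
proof (induction i)
  case 0 thus ?case by simp
next
  case (Suc i)
  show ?case
  proof (cases "i = 1")
    case True thus ?thesis using R7 by (simp add: numeral_eq_Suc)
  next
    case False
    then have i2: "2 \<le> i" using Suc.prems by simp
    have "cv (Suc i) (P i) \<otimes> cv (Suc i) \<sigma> = cv (Suc i) \<sigma> \<otimes> cv (Suc i) (P i)"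
      using Suc i2 by (intro cv_eq_conj) auto
    moreover have "cv (Suc i) \<sigma> = \<sigma>" using R1 i2 Suc.prems by simp
    ultimately show ?thesis by simp
  qed
qed

lemma PT_comm1: "j+2 \<le> i \<Longrightarrow> i+1 \<le> n \<Longrightarrow> P i \<otimes> T j = T j \<otimes> P i"
proof (induction j arbitrary: i)
  case 0 thus ?case using PT_comm1_base by simp
next
  case (Suc j)
  have "cv (Suc j) (cv (Suc (Suc j)) (P i)) \<otimes> cv (Suc j) (cv (Suc (Suc j)) (T j))
      = cv (Suc j) (cv (Suc (Suc j)) (T j)) \<otimes> cv (Suc j) (cv (Suc (Suc j)) (P i))"
    using Suc by (intro cv_eq_conj) auto
  moreover have "cv (Suc j) (cv (Suc (Suc j)) (P i)) = P i" using Suc.prems C3b by simp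
  ultimately show ?case by simp
qed

lemma PT_comm2_base: "1 \<le> j \<Longrightarrow> j+2 \<le> n \<Longrightarrow> \<beta> \<otimes> T j = T j \<otimes> \<beta>"
proof (induction j)
  case 0 thus ?case by simp
next
  case (Suc j)
  show ?case
  proof (cases "j = 0")
    case True
    have "cv 1 (cv 2 \<sigma>) \<otimes> cv 1 (cv 2 (cv 2 (cv 1 \<beta>))) = cv 1 (cv 2 (cv 2 (cv 1 \<beta>))) \<otimes> cv 1 (cv 2 \<sigma>)"
      using R7 n4 by (intro cv_eq_conj) auto
    moreover have "cv 1 (cv 2 (cv 2 (cv 1 \<beta>))) = \<beta>" using n4 by (simp add: cv_cv)
    ultimately show ?thesis using True by (simp add: numeral_eq_Suc)
  next
    case False
    have "cv (Suc j) (cv (Suc (Suc j)) \<beta>) \<otimes> cv (Suc j) (cv (Suc (Suc j)) (T j))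
      = cv (Suc j) (cv (Suc (Suc j)) (T j)) \<otimes> cv (Suc j) (cv (Suc (Suc j)) \<beta>)"
      using Suc False by (intro cv_eq_conj) auto
    moreover have "cv (Suc j) (cv (Suc (Suc j)) \<beta>) = \<beta>" using R3 False Suc.prems by simp
    ultimately show ?thesis by simp
  qed
qed

lemma PT_comm2: "i+1 \<le> j \<Longrightarrow> j+2 \<le> n \<Longrightarrow> P i \<otimes> T j = T j \<otimes> P i"
proof (induction i arbitrary: j)
  case 0 thus ?case using PT_comm2_base by simp
next
  case (Suc i)
  have "cv (Suc i) (P i) \<otimes> cv (Suc i) (T j) = cv (Suc i) (T j) \<otimes> cv (Suc i) (P i)"
    using Suc by (intro cv_eq_conj) auto
  moreover have "cv (Suc i) (T j) = T j" using Suc.prems C2 by simp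
  ultimately show ?case by simp
qed

end


locale tbgrp = vgrp +
  fixes S B
  assumes S_carr[simp]: "S i \<in> carrier G" and B_carr[simp]: "B i \<in> carrier G"
  and n4': "4 \<le> n"
  and TS1: "3 \<le> j \<Longrightarrow> j+1 \<le> n \<Longrightarrow> S 1 \<otimes> V j = V j \<otimes> S 1"
  and TB1: "B 1 \<otimes> B 1 = \<one>"
  and TB3: "2 \<le> j \<Longrightarrow> j+1 \<le> n \<Longrightarrow> B 1 \<otimes> V j = V j \<otimes> B 1"
  and Tmix1: "1 \<le> i \<Longrightarrow> i+2 \<le> n \<Longrightarrow> V i \<otimes> S (Suc i) \<otimes> V i = V (Suc i) \<otimes> S i \<otimes> V (Suc i)"
  and Tmix2: "1 \<le> i \<Longrightarrow> i+1 \<le> n \<Longrightarrow> B i \<otimes> V i = V i \<otimes> B (Suc i)"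
  and Tbraid: "S 1 \<otimes> S 2 \<otimes> S 1 = S 2 \<otimes> S 1 \<otimes> S 2"
  and TS13: "S 1 \<otimes> S 3 = S 3 \<otimes> S 1"
  and TB12: "B 1 \<otimes> B 2 = B 2 \<otimes> B 1"
  and TBS31: "B 3 \<otimes> S 1 = S 1 \<otimes> B 3"
  and Tmix3: "B 1 \<otimes> B 2 \<otimes> S 1 \<otimes> B 2 \<otimes> B 1 = V 1 \<otimes> S 1 \<otimes> V 1"
begin

lemma S_rec: "1 \<le> i \<Longrightarrow> i+2 \<le> n \<Longrightarrow> S (Suc i) = cv i (cv (Suc i) (S i))"
proof -
  assume a: "1 \<le> i" "i+2 \<le> n"
  have "cv i (S (Suc i)) = cv (Suc i) (S i)" using Tmix1[OF a] by (simp add: cv_def)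
  then have "cv i (cv i (S (Suc i))) = cv i (cv (Suc i) (S i))" by simp
  then show ?thesis using a by (simp add: cv_cv)
qed

lemma B_rec: "1 \<le> i \<Longrightarrow> i+1 \<le> n \<Longrightarrow> B (Suc i) = cv i (B i)"
proof -
  assume a: "1 \<le> i" "i+1 \<le> n"
  have "cv i (B i) = V i \<otimes> (V i \<otimes> B (Suc i))" using Tmix2[OF a] by (simp add: cv_def m_assoc)
  also have "\<dots> = B (Suc i)" using a by (simp add: m_assoc[symmetric] V_inv)
  finally show ?thesis by simp
qed

lemma Tr_S: "i+2 \<le> n \<Longrightarrow> Tr (S 1) i = S (Suc i)"
proof (induction i)
  case 0 thus ?case by simp
next
  case (Suc i)
  have "Tr (S 1) (Suc i) = cv (Suc i) (cv (Suc (Suc i)) (Tr (S 1) i))" by simp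
  also have "\<dots> = cv (Suc i) (cv (Suc (Suc i)) (S (Suc i)))" using Suc by simp
  also have "\<dots> = S (Suc (Suc i))" by (rule S_rec[symmetric]) (use Suc.prems in auto)
  finally show ?case .
qed

lemma Br_B: "i+1 \<le> n \<Longrightarrow> Br (B 1) i = B (Suc i)"
proof (induction i)
  case 0 thus ?case by simp
next
  case (Suc i)
  have "Br (B 1) (Suc i) = cv (Suc i) (Br (B 1) i)" by simp
  also have "\<dots> = cv (Suc i) (B (Suc i))" using Suc by simp
  also have "\<dots> = B (Suc (Suc i))" by (rule B_rec[symmetric]) (use Suc.prems in auto)
  finally show ?case .
qed

lemma red_rels_hold:
  "3 \<le> j \<Longrightarrow> j+1 \<le> n \<Longrightarrow> cv j (S 1) = S 1"
  "B 1 \<otimes> B 1 = \<one>"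
  "2 \<le> j \<Longrightarrow> j+1 \<le> n \<Longrightarrow> cv j (B 1) = B 1"
  "cv 1 (S 1) \<otimes> cv 2 (S 1) \<otimes> cv 1 (S 1) = cv 2 (S 1) \<otimes> cv 1 (S 1) \<otimes> cv 2 (S 1)"
  "S 1 \<otimes> cv 2 (cv 3 (cv 1 (cv 2 (S 1)))) = cv 2 (cv 3 (cv 1 (cv 2 (S 1)))) \<otimes> S 1"
  "B 1 \<otimes> cv 1 (B 1) = cv 1 (B 1) \<otimes> B 1"
  "S 1 \<otimes> cv 2 (cv 1 (B 1)) = cv 2 (cv 1 (B 1)) \<otimes> S 1"
  "cv 1 (B 1) \<otimes> B 1 \<otimes> S 1 \<otimes> B 1 \<otimes> cv 1 (B 1) = cv 1 (S 1)"
proof -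
  show "3 \<le> j \<Longrightarrow> j+1 \<le> n \<Longrightarrow> cv j (S 1) = S 1"
  proof -
    assume a: "3 \<le> j" "j+1 \<le> n"
    show ?thesis by (rule fix_of_comm[OF _ _ S_carr TS1[OF a]]) (use a in simp_all)
  qed
  show "B 1 \<otimes> B 1 = \<one>" by (rule TB1)
  show "2 \<le> j \<Longrightarrow> j+1 \<le> n \<Longrightarrow> cv j (B 1) = B 1"
  proof -
    assume a: "2 \<le> j" "j+1 \<le> n"
    show ?thesis by (rule fix_of_comm[OF _ _ B_carr TB3[OF a]]) (use a in simp_all)
  qed
  have e2: "S 2 = cv 1 (cv 2 (S 1))"
  proof -
    have "S (Suc 1) = cv 1 (cv (Suc 1) (S 1))" by (rule S_rec) (use n4' in auto)
    then show ?thesis by (simp only: Suc_1)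
  qed
  have e3: "S 3 = cv 2 (cv 3 (S 2))"
  proof -
    have "S (Suc 2) = cv 2 (cv (Suc 2) (S 2))" by (rule S_rec) (use n4' in auto)
    then show ?thesis by (simp only: numeral_3_eq_3 numeral_2_eq_2)
  qed
  have s2: "cv 2 (S 1) = cv 1 (S 2)" unfolding e2 using n4' by (simp add: cv_cv)
  show "cv 1 (S 1) \<otimes> cv 2 (S 1) \<otimes> cv 1 (S 1) = cv 2 (S 1) \<otimes> cv 1 (S 1) \<otimes> cv 2 (S 1)"
    unfolding s2 by (rule cv_braid_conj[OF _ _ S_carr S_carr Tbraid]) (use n4' in simp_all)
  have s3: "cv 2 (cv 3 (cv 1 (cv 2 (S 1)))) = S 3"
    unfolding e3 e2 ..
  show "S 1 \<otimes> cv 2 (cv 3 (cv 1 (cv 2 (S 1)))) = cv 2 (cv 3 (cv 1 (cv 2 (S 1)))) \<otimes> S 1"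
    unfolding s3 by (rule TS13)
  have b2: "cv 1 (B 1) = B 2"
  proof -
    have "B (Suc 1) = cv 1 (B 1)" by (rule B_rec) (use n4' in auto)
    then show ?thesis by (simp only: Suc_1)
  qed
  have b3: "cv 2 (cv 1 (B 1)) = B 3"
  proof -
    have "B (Suc 2) = cv 2 (B 2)" by (rule B_rec) (use n4' in auto)
    then show ?thesis unfolding b2 by (simp only: numeral_3_eq_3 numeral_2_eq_2)
  qed
  show "B 1 \<otimes> cv 1 (B 1) = cv 1 (B 1) \<otimes> B 1" unfolding b2 by (rule TB12)
  show "S 1 \<otimes> cv 2 (cv 1 (B 1)) = cv 2 (cv 1 (B 1)) \<otimes> S 1" unfolding b3 by (rule TBS31[symmetric])
  have "B 2 \<otimes> B 1 \<otimes> S 1 \<otimes> B 1 \<otimes> B 2 = (B 2 \<otimes> B 1) \<otimes> S 1 \<otimes> (B 1 \<otimes> B 2)" by (simp add: m_assoc)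
  also have "\<dots> = (B 1 \<otimes> B 2) \<otimes> S 1 \<otimes> (B 2 \<otimes> B 1)" by (simp only: TB12)
  also have "\<dots> = cv 1 (S 1)" using Tmix3 by (simp add: m_assoc cv_def)
  finally show "cv 1 (B 1) \<otimes> B 1 \<otimes> S 1 \<otimes> B 1 \<otimes> cv 1 (B 1) = cv 1 (S 1)" unfolding b2 .
qed

end



lemma wf_concat_v: "wf_word gens (concat (map v ks)) \<longleftrightarrow> (\<forall>k\<in>set ks. TVir k \<in> gens)"
  by (induction ks) (auto simp: v_def)

lemma red_wf[simp]:
  "wf_word (red_gens n) (v i) \<longleftrightarrow> 1 \<le> i \<and> i+1 \<le> n"
  "wf_word (red_gens n) (s i) \<longleftrightarrow> i = 1"
  "wf_word (red_gens n) (b i) \<longleftrightarrow> i = 1"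
  by (auto simp: red_gens_def wf_word_def v_def s_def b_def)

lemma tb_wf[simp]:
  "wf_word (tb_gens n) (v i) \<longleftrightarrow> 1 \<le> i \<and> i+1 \<le> n"
  "wf_word (tb_gens n) (s i) \<longleftrightarrow> 1 \<le> i \<and> i+1 \<le> n"
  "wf_word (tb_gens n) (b i) \<longleftrightarrow> 1 \<le> i \<and> i \<le> n"
  by (auto simp: tb_gens_def wf_word_def v_def s_def b_def)

lemma wf_sig:
  "i+2 \<le> n \<Longrightarrow> wf_word (red_gens n) (sig_word i)"
  "i+2 \<le> n \<Longrightarrow> wf_word (tb_gens n) (sig_word i)"
  by (auto simp: sig_word_def vdown_def vup_def wf_concat_v red_gens_def tb_gens_def s_def)

lemma wf_bar:
  "i+1 \<le> n \<Longrightarrow> wf_word (red_gens n) (bar_word i)"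
  "i+1 \<le> n \<Longrightarrow> wf_word (tb_gens n) (bar_word i)"
  by (auto simp: bar_word_def vdown_def vup_def wf_concat_v red_gens_def tb_gens_def b_def)

lemma rel_cls: "(l, r) \<in> R \<Longrightarrow> wf_word gens l \<Longrightarrow> wf_word gens r \<Longrightarrow>
  pres_class gens R l = pres_class gens R r"
  using pres_eq.rel[of l r R gens "[]" "[]"] cls_eq_iff[of gens l R r] by simp

abbreviation "cR n \<equiv> pres_class (red_gens n) (red_rels n)"
abbreviation "cT n \<equiv> pres_class (tb_gens n) (tb_rels n)"

definition VR :: "nat \<Rightarrow> nat \<Rightarrow> tbgen word set" where
  "VR n i = (if 1 \<le> i \<and> i+1 \<le> n then cR n (v i) else \<one>\<^bsub>RedTB n\<^esub>)"
definition VT :: "nat \<Rightarrow> nat \<Rightarrow> tbgen word set" where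
  "VT n i = (if 1 \<le> i \<and> i+1 \<le> n then cT n (v i) else \<one>\<^bsub>TB n\<^esub>)"
definition ST :: "nat \<Rightarrow> nat \<Rightarrow> tbgen word set" where
  "ST n i = (if 1 \<le> i \<and> i+1 \<le> n then cT n (s i) else \<one>\<^bsub>TB n\<^esub>)"
definition BT :: "nat \<Rightarrow> nat \<Rightarrow> tbgen word set" where
  "BT n i = (if 1 \<le> i \<and> i \<le> n then cT n (b i) else \<one>\<^bsub>TB n\<^esub>)"

lemma RedTB_group: "group (RedTB n)" unfolding RedTB_def by (rule PG_group)
lemma TB_group: "group (TB n)" unfolding TB_def by (rule PG_group)

lemma VR_carr: "VR n i \<in> carrier (RedTB n)"
  using monoid.one_closed[OF group.is_monoid[OF RedTB_group]] by (auto simp: VR_def RedTB_def intro: cls_carrier)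
lemma VT_carr: "VT n i \<in> carrier (TB n)"
  using monoid.one_closed[OF group.is_monoid[OF TB_group]] by (auto simp: VT_def TB_def intro: cls_carrier)
lemma ST_carr: "ST n i \<in> carrier (TB n)"
  using monoid.one_closed[OF group.is_monoid[OF TB_group]] by (auto simp: ST_def TB_def intro: cls_carrier)
lemma BT_carr: "BT n i \<in> carrier (TB n)"
  using monoid.one_closed[OF group.is_monoid[OF TB_group]] by (auto simp: BT_def TB_def intro: cls_carrier)

lemma VR_in: "1 \<le> i \<Longrightarrow> i+1 \<le> n \<Longrightarrow> VR n i = cR n (v i)" by (simp add: VR_def)
lemma VT_in: "1 \<le> i \<Longrightarrow> i+1 \<le> n \<Longrightarrow> VT n i = cT n (v i)" by (simp add: VT_def)
lemma ST_in: "1 \<le> i \<Longrightarrow> i+1 \<le> n \<Longrightarrow> ST n i = cT n (s i)" by (simp add: ST_def)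
lemma BT_in: "1 \<le> i \<Longrightarrow> i \<le> n \<Longrightarrow> BT n i = cT n (b i)" by (simp add: BT_def)

lemma RedTB_mult: "wf_word (red_gens n) u \<Longrightarrow> wf_word (red_gens n) w \<Longrightarrow>
  cR n u \<otimes>\<^bsub>RedTB n\<^esub> cR n w = cR n (u @ w)"
  unfolding RedTB_def by (rule PG_mult)
lemma TB_mult: "wf_word (tb_gens n) u \<Longrightarrow> wf_word (tb_gens n) w \<Longrightarrow>
  cT n u \<otimes>\<^bsub>TB n\<^esub> cT n w = cT n (u @ w)"
  unfolding TB_def by (rule PG_mult)
lemma RedTB_one: "\<one>\<^bsub>RedTB n\<^esub> = cR n []" unfolding RedTB_def by (rule PG_one)
lemma TB_one: "\<one>\<^bsub>TB n\<^esub> = cT n []" unfolding TB_def by (rule PG_one)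

definition psi :: "tbgen \<Rightarrow> tbgen word" where
  "psi g = (case g of TSig i \<Rightarrow> sig_word (i - 1) | TVir i \<Rightarrow> v i | TBar i \<Rightarrow> bar_word (i - 1))"

lemma psi_simps[simp]:
  "wsubst psi (s i) = sig_word (i - 1)"
  "wsubst psi (v i) = v i"
  "wsubst psi (b i) = bar_word (i - 1)"
  by (simp_all add: psi_def s_def v_def b_def)

definition okR :: "nat \<Rightarrow> tbgen word \<times> tbgen word \<Rightarrow> bool" where
  "okR n p \<longleftrightarrow> wf_word (red_gens n) (wsubst psi (fst p)) \<and> cR n (wsubst psi (fst p)) = cR n (wsubst psi (snd p))"

definition okT :: "nat \<Rightarrow> tbgen word \<times> tbgen word \<Rightarrow> bool" where
  "okT n p \<longleftrightarrow> wf_word (tb_gens n) (fst p) \<and> cT n (fst p) = cT n (snd p)"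

locale tbctx =
  fixes n :: nat
  assumes n4: "4 \<le> n"
begin

lemma vR_rels:
  "1 \<le> i \<Longrightarrow> i+1 \<le> n \<Longrightarrow> cR n (v i @ v i) = cR n []"
  "1 \<le> i \<Longrightarrow> i+2 \<le> j \<Longrightarrow> j+1 \<le> n \<Longrightarrow> cR n (v i @ v j) = cR n (v j @ v i)"
  "1 \<le> i \<Longrightarrow> i+2 \<le> n \<Longrightarrow> cR n (v i @ v (i+1) @ v i) = cR n (v (i+1) @ v i @ v (i+1))"
  by (rule rel_cls; auto simp: red_rels_def v_def red_gens_def)+

lemma vT_rels:
  "1 \<le> i \<Longrightarrow> i+1 \<le> n \<Longrightarrow> cT n (v i @ v i) = cT n []"
  "1 \<le> i \<Longrightarrow> i+2 \<le> j \<Longrightarrow> j+1 \<le> n \<Longrightarrow> cT n (v i @ v j) = cT n (v j @ v i)"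
  "1 \<le> i \<Longrightarrow> i+2 \<le> n \<Longrightarrow> cT n (v i @ v (i+1) @ v i) = cT n (v (i+1) @ v i @ v (i+1))"
  by (rule rel_cls; auto simp: tb_rels_def v_def tb_gens_def)+

lemma RV_vgrp: "vgrp (RedTB n) n (VR n)"
proof (rule vgrp.intro[OF RedTB_group], rule vgrp_axioms.intro)
  show "VR n i \<in> carrier (RedTB n)" for i by (rule VR_carr)
  show "VR n i \<otimes>\<^bsub>RedTB n\<^esub> VR n i = \<one>\<^bsub>RedTB n\<^esub>" if "1 \<le> i" "Suc i \<le> n" for i
    using that vR_rels(1)[of i] by (simp add: VR_in RedTB_mult RedTB_one)
  show "VR n i \<otimes>\<^bsub>RedTB n\<^esub> VR n j = VR n j \<otimes>\<^bsub>RedTB n\<^esub> VR n i"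
    if "1 \<le> i" "Suc (Suc i) \<le> j" "Suc j \<le> n" for i j
    using that vR_rels(2)[of i j] by (simp add: VR_in RedTB_mult)
  show "VR n i \<otimes>\<^bsub>RedTB n\<^esub> VR n (Suc i) \<otimes>\<^bsub>RedTB n\<^esub> VR n i =
        VR n (Suc i) \<otimes>\<^bsub>RedTB n\<^esub> VR n i \<otimes>\<^bsub>RedTB n\<^esub> VR n (Suc i)"
    if "1 \<le> i" "Suc (Suc i) \<le> n" for i
    using that vR_rels(3)[of i] by (simp add: VR_in RedTB_mult)
qed

lemma TV_vgrp: "vgrp (TB n) n (VT n)"
proof (rule vgrp.intro[OF TB_group], rule vgrp_axioms.intro)
  show "VT n i \<in> carrier (TB n)" for i by (rule VT_carr)
  show "VT n i \<otimes>\<^bsub>TB n\<^esub> VT n i = \<one>\<^bsub>TB n\<^esub>" if "1 \<le> i" "Suc i \<le> n" for i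
    using that vT_rels(1)[of i] by (simp add: VT_in TB_mult TB_one)
  show "VT n i \<otimes>\<^bsub>TB n\<^esub> VT n j = VT n j \<otimes>\<^bsub>TB n\<^esub> VT n i"
    if "1 \<le> i" "Suc (Suc i) \<le> j" "Suc j \<le> n" for i j
    using that vT_rels(2)[of i j] by (simp add: VT_in TB_mult)
  show "VT n i \<otimes>\<^bsub>TB n\<^esub> VT n (Suc i) \<otimes>\<^bsub>TB n\<^esub> VT n i =
        VT n (Suc i) \<otimes>\<^bsub>TB n\<^esub> VT n i \<otimes>\<^bsub>TB n\<^esub> VT n (Suc i)"
    if "1 \<le> i" "Suc (Suc i) \<le> n" for i
    using that vT_rels(3)[of i] by (simp add: VT_in TB_mult)
qed


sublocale RV: vgrp "RedTB n" n "VR n" by (rule RV_vgrp)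

lemma redR:
  "3 \<le> j \<Longrightarrow> j+1 \<le> n \<Longrightarrow> cR n (s 1 @ v j) = cR n (v j @ s 1)"
  "cR n (b 1 @ b 1) = cR n []"
  "2 \<le> j \<Longrightarrow> j+1 \<le> n \<Longrightarrow> cR n (b 1 @ v j) = cR n (v j @ b 1)"
  "cR n (v 1 @ s 1 @ v 1 @ v 2 @ s 1 @ v 2 @ v 1 @ s 1 @ v 1) = cR n (v 2 @ s 1 @ v 2 @ v 1 @ s 1 @ v 1 @ v 2 @ s 1 @ v 2)"
  "cR n (s 1 @ v 2 @ v 3 @ v 1 @ v 2 @ s 1 @ v 2 @ v 1 @ v 3 @ v 2) = cR n (v 2 @ v 3 @ v 1 @ v 2 @ s 1 @ v 2 @ v 1 @ v 3 @ v 2 @ s 1)"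
  "cR n (b 1 @ v 1 @ b 1 @ v 1) = cR n (v 1 @ b 1 @ v 1 @ b 1)"
  "cR n (s 1 @ v 2 @ v 1 @ b 1 @ v 1 @ v 2) = cR n (v 2 @ v 1 @ b 1 @ v 1 @ v 2 @ s 1)"
  "cR n (v 1 @ b 1 @ v 1 @ b 1 @ s 1 @ b 1 @ v 1 @ b 1 @ v 1) = cR n (v 1 @ s 1 @ v 1)"
  by (rule rel_cls; insert n4; auto simp: red_rels_def v_def s_def b_def red_gens_def)+

lemma tbT:
  "3 \<le> j \<Longrightarrow> j+1 \<le> n \<Longrightarrow> cT n (s 1 @ v j) = cT n (v j @ s 1)"
  "cT n (b 1 @ b 1) = cT n []"
  "2 \<le> j \<Longrightarrow> j+1 \<le> n \<Longrightarrow> cT n (b 1 @ v j) = cT n (v j @ b 1)"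
  "1 \<le> i \<Longrightarrow> i+2 \<le> n \<Longrightarrow> cT n (v i @ s (Suc i) @ v i) = cT n (v (Suc i) @ s i @ v (Suc i))"
  "1 \<le> i \<Longrightarrow> i+1 \<le> n \<Longrightarrow> cT n (b i @ v i) = cT n (v i @ b (Suc i))"
  "cT n (s 1 @ s 2 @ s 1) = cT n (s 2 @ s 1 @ s 2)"
  "cT n (s 1 @ s 3) = cT n (s 3 @ s 1)"
  "cT n (b 1 @ b 2) = cT n (b 2 @ b 1)"
  "cT n (b 3 @ s 1) = cT n (s 1 @ b 3)"
  "cT n (b 1 @ b 2 @ s 1 @ b 2 @ b 1) = cT n (v 1 @ s 1 @ v 1)"
  by (rule rel_cls; insert n4; auto simp: tb_rels_def v_def s_def b_def tb_gens_def)+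


lemma cR_carr: "wf_word (red_gens n) w \<Longrightarrow> cR n w \<in> carrier (RedTB n)"
  unfolding RedTB_def by (rule cls_carrier)
lemma cT_carr: "wf_word (tb_gens n) w \<Longrightarrow> cT n w \<in> carrier (TB n)"
  unfolding TB_def by (rule cls_carrier)

lemma R_redgrp: "redgrp (RedTB n) n (VR n) (cR n (s 1)) (cR n (b 1))"
proof (rule redgrp.intro[OF RV_vgrp], rule redgrp_axioms.intro)
  show "cR n (s 1) \<in> carrier (RedTB n)" by (simp add: cR_carr)
  show "cR n (b 1) \<in> carrier (RedTB n)" by (simp add: cR_carr)
  show "4 \<le> n" by (rule n4)
  show "RV.cv j (cR n (s 1)) = cR n (s 1)" if "3 \<le> j" "j+1 \<le> n" for j
    by (rule RV.fix_of_comm) (use that n4 in \<open>simp_all add: VR_in RedTB_mult redR[simplified] cR_carr\<close>)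
  show "cR n (b 1) \<otimes>\<^bsub>RedTB n\<^esub> cR n (b 1) = \<one>\<^bsub>RedTB n\<^esub>"
    using redR(2) by (simp add: RedTB_mult RedTB_one)
  show "RV.cv j (cR n (b 1)) = cR n (b 1)" if "2 \<le> j" "j+1 \<le> n" for j
    by (rule RV.fix_of_comm) (use that n4 in \<open>simp_all add: VR_in RedTB_mult redR[simplified] cR_carr\<close>)
  show "RV.cv 1 (cR n (s 1)) \<otimes>\<^bsub>RedTB n\<^esub> RV.cv 2 (cR n (s 1)) \<otimes>\<^bsub>RedTB n\<^esub> RV.cv 1 (cR n (s 1)) =
    RV.cv 2 (cR n (s 1)) \<otimes>\<^bsub>RedTB n\<^esub> RV.cv 1 (cR n (s 1)) \<otimes>\<^bsub>RedTB n\<^esub> RV.cv 2 (cR n (s 1))"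
    unfolding RV.cv_def using n4 by (simp add: VR_in RedTB_mult redR[simplified])
  show "cR n (s 1) \<otimes>\<^bsub>RedTB n\<^esub> RV.cv 2 (RV.cv 3 (RV.cv 1 (RV.cv 2 (cR n (s 1))))) =
    RV.cv 2 (RV.cv 3 (RV.cv 1 (RV.cv 2 (cR n (s 1))))) \<otimes>\<^bsub>RedTB n\<^esub> cR n (s 1)"
    unfolding RV.cv_def using n4 by (simp add: VR_in RedTB_mult redR[simplified])
  show "cR n (b 1) \<otimes>\<^bsub>RedTB n\<^esub> RV.cv 1 (cR n (b 1)) = RV.cv 1 (cR n (b 1)) \<otimes>\<^bsub>RedTB n\<^esub> cR n (b 1)"
    unfolding RV.cv_def using n4 by (simp add: VR_in RedTB_mult redR[simplified])
  show "cR n (s 1) \<otimes>\<^bsub>RedTB n\<^esub> RV.cv 2 (RV.cv 1 (cR n (b 1))) = RV.cv 2 (RV.cv 1 (cR n (b 1))) \<otimes>\<^bsub>RedTB n\<^esub> cR n (s 1)"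
    unfolding RV.cv_def using n4 by (simp add: VR_in RedTB_mult redR[simplified])
  show "RV.cv 1 (cR n (b 1)) \<otimes>\<^bsub>RedTB n\<^esub> cR n (b 1) \<otimes>\<^bsub>RedTB n\<^esub> cR n (s 1) \<otimes>\<^bsub>RedTB n\<^esub> cR n (b 1) \<otimes>\<^bsub>RedTB n\<^esub> RV.cv 1 (cR n (b 1)) =
    RV.cv 1 (cR n (s 1))"
    unfolding RV.cv_def using n4 by (simp add: VR_in RedTB_mult redR[simplified])
qed

sublocale R: redgrp "RedTB n" n "VR n" "cR n (s 1)" "cR n (b 1)" by (rule R_redgrp)

lemma Tt_tbgrp: "tbgrp (TB n) n (VT n) (ST n) (BT n)"
proof (rule tbgrp.intro[OF TV_vgrp], rule tbgrp_axioms.intro)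
  show "ST n i \<in> carrier (TB n)" for i by (rule ST_carr)
  show "BT n i \<in> carrier (TB n)" for i by (rule BT_carr)
  show "4 \<le> n" by (rule n4)
  show "ST n 1 \<otimes>\<^bsub>TB n\<^esub> VT n j = VT n j \<otimes>\<^bsub>TB n\<^esub> ST n 1" if "3 \<le> j" "j+1 \<le> n" for j
    using that n4 by (simp add: ST_in VT_in TB_mult tbT[simplified])
  show "BT n 1 \<otimes>\<^bsub>TB n\<^esub> BT n 1 = \<one>\<^bsub>TB n\<^esub>"
    using n4 by (simp add: BT_in TB_mult TB_one tbT[simplified])
  show "BT n 1 \<otimes>\<^bsub>TB n\<^esub> VT n j = VT n j \<otimes>\<^bsub>TB n\<^esub> BT n 1" if "2 \<le> j" "j+1 \<le> n" for j
    using that n4 by (simp add: BT_in VT_in TB_mult tbT[simplified])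
  show "VT n i \<otimes>\<^bsub>TB n\<^esub> ST n (Suc i) \<otimes>\<^bsub>TB n\<^esub> VT n i = VT n (Suc i) \<otimes>\<^bsub>TB n\<^esub> ST n i \<otimes>\<^bsub>TB n\<^esub> VT n (Suc i)"
    if "1 \<le> i" "i+2 \<le> n" for i
    using that n4 by (simp add: ST_in VT_in TB_mult tbT[simplified])
  show "BT n i \<otimes>\<^bsub>TB n\<^esub> VT n i = VT n i \<otimes>\<^bsub>TB n\<^esub> BT n (Suc i)" if "1 \<le> i" "i+1 \<le> n" for i
    using that n4 by (simp add: BT_in VT_in TB_mult tbT[simplified])
  show "ST n 1 \<otimes>\<^bsub>TB n\<^esub> ST n 2 \<otimes>\<^bsub>TB n\<^esub> ST n 1 = ST n 2 \<otimes>\<^bsub>TB n\<^esub> ST n 1 \<otimes>\<^bsub>TB n\<^esub> ST n 2"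
    using n4 by (simp add: ST_in TB_mult tbT[simplified])
  show "ST n 1 \<otimes>\<^bsub>TB n\<^esub> ST n 3 = ST n 3 \<otimes>\<^bsub>TB n\<^esub> ST n 1"
    using n4 by (simp add: ST_in TB_mult tbT[simplified])
  show "BT n 1 \<otimes>\<^bsub>TB n\<^esub> BT n 2 = BT n 2 \<otimes>\<^bsub>TB n\<^esub> BT n 1"
    using n4 by (simp add: BT_in TB_mult tbT[simplified])
  show "BT n 3 \<otimes>\<^bsub>TB n\<^esub> ST n 1 = ST n 1 \<otimes>\<^bsub>TB n\<^esub> BT n 3"
    using n4 by (simp add: BT_in ST_in TB_mult tbT[simplified])
  show "BT n 1 \<otimes>\<^bsub>TB n\<^esub> BT n 2 \<otimes>\<^bsub>TB n\<^esub> ST n 1 \<otimes>\<^bsub>TB n\<^esub> BT n 2 \<otimes>\<^bsub>TB n\<^esub> BT n 1 =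
    VT n 1 \<otimes>\<^bsub>TB n\<^esub> ST n 1 \<otimes>\<^bsub>TB n\<^esub> VT n 1"
    using n4 by (simp add: BT_in ST_in VT_in TB_mult tbT(10)[simplified])
qed

sublocale Tt: tbgrp "TB n" n "VT n" "ST n" "BT n" by (rule Tt_tbgrp)


lemma wf_red_vs: "(\<forall>k\<in>set ks. 1 \<le> k \<and> k+1 \<le> n) \<Longrightarrow> wf_word (red_gens n) (concat (map v ks))"
  by (auto simp: wf_concat_v red_gens_def)
lemma wf_tb_vs: "(\<forall>k\<in>set ks. 1 \<le> k \<and> k+1 \<le> n) \<Longrightarrow> wf_word (tb_gens n) (concat (map v ks))"
  by (auto simp: wf_concat_v tb_gens_def)

lemma cR_vs: "(\<forall>k\<in>set ks. 1 \<le> k \<and> k+1 \<le> n) \<Longrightarrow> cR n (concat (map v ks)) = RV.prodV ks"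
proof (induction ks)
  case Nil thus ?case by (simp add: RV.prodV_Nil RedTB_one)
next
  case (Cons k ks)
  have "cR n (concat (map v (k#ks))) = cR n (v k) \<otimes>\<^bsub>RedTB n\<^esub> cR n (concat (map v ks))"
    using Cons.prems wf_red_vs[of ks] by (simp add: RedTB_mult)
  also have "\<dots> = VR n k \<otimes>\<^bsub>RedTB n\<^esub> RV.prodV ks" using Cons by (simp add: VR_in)
  finally show ?case by (simp add: RV.prodV_Cons)
qed

lemma cT_vs: "(\<forall>k\<in>set ks. 1 \<le> k \<and> k+1 \<le> n) \<Longrightarrow> cT n (concat (map v ks)) = Tt.prodV ks"
proof (induction ks)
  case Nil thus ?case by (simp add: Tt.prodV_Nil TB_one)
next
  case (Cons k ks)
  have "cT n (concat (map v (k#ks))) = cT n (v k) \<otimes>\<^bsub>TB n\<^esub> cT n (concat (map v ks))"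
    using Cons.prems wf_tb_vs[of ks] by (simp add: TB_mult)
  also have "\<dots> = VT n k \<otimes>\<^bsub>TB n\<^esub> Tt.prodV ks" using Cons by (simp add: VT_in)
  finally show ?case by (simp add: Tt.prodV_Cons)
qed

lemma cR_sig: "i+2 \<le> n \<Longrightarrow> cR n (sig_word i) = RV.Tr (cR n (s 1)) i"
proof -
  assume a: "i+2 \<le> n"
  let ?A = "concat (map v (rev [1..<i+1]))" and ?B = "concat (map v (rev [2..<i+2]))"
  let ?B' = "concat (map v [2..<i+2])" and ?A' = "concat (map v [1..<i+1])"
  have w: "wf_word (red_gens n) ?A" "wf_word (red_gens n) ?B" "wf_word (red_gens n) ?A'" "wf_word (red_gens n) ?B'"
    using a by (auto intro!: wf_red_vs)
  have "cR n (sig_word i) = cR n ?A \<otimes>\<^bsub>RedTB n\<^esub> cR n ?B \<otimes>\<^bsub>RedTB n\<^esub> cR n (s 1)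
      \<otimes>\<^bsub>RedTB n\<^esub> cR n ?B' \<otimes>\<^bsub>RedTB n\<^esub> cR n ?A'"
    unfolding sig_word_def vdown_def vup_def using w by (simp add: RedTB_mult)
  also have "\<dots> = RV.sigw (cR n (s 1)) i"
    proof -
    have h0: "cR n (concat (map v (rev [1..<i+1]))) = RV.prodV (rev [1..<i+1])" using a by (intro cR_vs) auto
    have h1: "cR n (concat (map v (rev [2..<i+2]))) = RV.prodV (rev [2..<i+2])" using a by (intro cR_vs) auto
    have h2: "cR n (concat (map v ([1..<i+1]))) = RV.prodV ([1..<i+1])" using a by (intro cR_vs) auto
    have h3: "cR n (concat (map v ([2..<i+2]))) = RV.prodV ([2..<i+2])" using a by (intro cR_vs) auto
    show ?thesis unfolding RV.sigw_def h0 h1 h2 h3 ..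
  qed
  also have "\<dots> = RV.Tr (cR n (s 1)) i" using a by (intro RV.sigw_Tr) (simp_all add: cR_carr)
  finally show ?thesis .
qed

lemma cR_bar: "i+1 \<le> n \<Longrightarrow> cR n (bar_word i) = RV.Br (cR n (b 1)) i"
proof -
  assume a: "i+1 \<le> n"
  let ?A = "concat (map v (rev [1..<i+1]))" and ?A' = "concat (map v [1..<i+1])"
  have w: "wf_word (red_gens n) ?A" "wf_word (red_gens n) ?A'"
    using a by (auto intro!: wf_red_vs)
  have "cR n (bar_word i) = cR n ?A \<otimes>\<^bsub>RedTB n\<^esub> cR n (b 1) \<otimes>\<^bsub>RedTB n\<^esub> cR n ?A'"
    unfolding bar_word_def vdown_def vup_def using w by (simp add: RedTB_mult)
  also have "\<dots> = RV.barw (cR n (b 1)) i"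
    proof -
    have h0: "cR n (concat (map v (rev [1..<i+1]))) = RV.prodV (rev [1..<i+1])" using a by (intro cR_vs) auto
    have h1: "cR n (concat (map v ([1..<i+1]))) = RV.prodV ([1..<i+1])" using a by (intro cR_vs) auto
    show ?thesis unfolding RV.barw_def h0 h1 ..
  qed
  also have "\<dots> = RV.Br (cR n (b 1)) i" by (intro RV.barw_Br) (simp add: cR_carr)
  finally show ?thesis .
qed

lemma cT_sig: "i+2 \<le> n \<Longrightarrow> cT n (sig_word i) = cT n (s (Suc i))"
proof -
  assume a: "i+2 \<le> n"
  let ?A = "concat (map v (rev [1..<i+1]))" and ?B = "concat (map v (rev [2..<i+2]))"
  let ?B' = "concat (map v [2..<i+2])" and ?A' = "concat (map v [1..<i+1])"
  have w: "wf_word (tb_gens n) ?A" "wf_word (tb_gens n) ?B" "wf_word (tb_gens n) ?A'" "wf_word (tb_gens n) ?B'"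
    using a by (auto intro!: wf_tb_vs)
  have "cT n (sig_word i) = cT n ?A \<otimes>\<^bsub>TB n\<^esub> cT n ?B \<otimes>\<^bsub>TB n\<^esub> cT n (s 1)
      \<otimes>\<^bsub>TB n\<^esub> cT n ?B' \<otimes>\<^bsub>TB n\<^esub> cT n ?A'"
    unfolding sig_word_def vdown_def vup_def using w a by (simp add: TB_mult)
  also have "\<dots> = Tt.sigw (ST n 1) i"
    proof -
    have h0: "cT n (concat (map v (rev [1..<i+1]))) = Tt.prodV (rev [1..<i+1])" using a by (intro cT_vs) auto
    have h1: "cT n (concat (map v (rev [2..<i+2]))) = Tt.prodV (rev [2..<i+2])" using a by (intro cT_vs) auto
    have h2: "cT n (concat (map v ([1..<i+1]))) = Tt.prodV ([1..<i+1])" using a by (intro cT_vs) auto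
    have h3: "cT n (concat (map v ([2..<i+2]))) = Tt.prodV ([2..<i+2])" using a by (intro cT_vs) auto
    have hx: "ST n 1 = cT n (s 1)" using a by (simp add: ST_in)
    show ?thesis unfolding Tt.sigw_def h0 h1 h2 h3 hx ..
  qed
  also have "\<dots> = Tt.Tr (ST n 1) i" using a by (intro Tt.sigw_Tr) (simp_all add: ST_carr)
  also have "\<dots> = ST n (Suc i)" using a by (rule Tt.Tr_S)
  also have "\<dots> = cT n (s (Suc i))" using a by (simp add: ST_in)
  finally show ?thesis .
qed

lemma cT_bar: "i+1 \<le> n \<Longrightarrow> cT n (bar_word i) = cT n (b (Suc i))"
proof -
  assume a: "i+1 \<le> n"
  let ?A = "concat (map v (rev [1..<i+1]))" and ?A' = "concat (map v [1..<i+1])"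
  have w: "wf_word (tb_gens n) ?A" "wf_word (tb_gens n) ?A'"
    using a by (auto intro!: wf_tb_vs)
  have "cT n (bar_word i) = cT n ?A \<otimes>\<^bsub>TB n\<^esub> cT n (b 1) \<otimes>\<^bsub>TB n\<^esub> cT n ?A'"
    unfolding bar_word_def vdown_def vup_def using w a by (simp add: TB_mult)
  also have "\<dots> = Tt.barw (BT n 1) i"
    proof -
    have h0: "cT n (concat (map v (rev [1..<i+1]))) = Tt.prodV (rev [1..<i+1])" using a by (intro cT_vs) auto
    have h1: "cT n (concat (map v ([1..<i+1]))) = Tt.prodV ([1..<i+1])" using a by (intro cT_vs) auto
    have hx: "BT n 1 = cT n (b 1)" using a by (simp add: BT_in)
    show ?thesis unfolding Tt.barw_def h0 h1 hx ..
  qed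
  also have "\<dots> = Tt.Br (BT n 1) i" by (intro Tt.barw_Br) (simp add: BT_carr)
  also have "\<dots> = BT n (Suc i)" using a by (rule Tt.Br_B)
  also have "\<dots> = cT n (b (Suc i))" using a by (simp add: BT_in)
  finally show ?thesis .
qed


lemma cR_app: "wf_word (red_gens n) X \<Longrightarrow> wf_word (red_gens n) Y \<Longrightarrow>
  cR n (X @ Y) = cR n X \<otimes>\<^bsub>RedTB n\<^esub> cR n Y"
  by (simp add: RedTB_mult)

lemma VR_in': "1 \<le> i \<Longrightarrow> i+1 \<le> n \<Longrightarrow> cR n (v i) = VR n i" by (simp add: VR_def)

lemma RV_inv2: "1 \<le> i \<Longrightarrow> i+1 \<le> n \<Longrightarrow> x \<in> carrier (RedTB n) \<Longrightarrow>
  VR n i \<otimes>\<^bsub>RedTB n\<^esub> (VR n i \<otimes>\<^bsub>RedTB n\<^esub> x) = x"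
  by (simp add: RV.m_assoc[symmetric] RV.V_inv)

lemmas cRsimps = cR_app wf_sig(1) wf_bar(1) cR_sig cR_bar VR_in' RV.m_assoc RV.V_inv RV_inv2 cR_carr

abbreviation "TR \<equiv> RV.Tr (cR n (s 1))"
abbreviation "PR \<equiv> RV.Br (cR n (b 1))"

lemma F1: "1 \<le> i \<Longrightarrow> i+2 \<le> n \<Longrightarrow> okR n (s i @ s (Suc i) @ s i, s (Suc i) @ s i @ s (Suc i))"
proof -
  assume a: "1 \<le> i" "i+2 \<le> n"
  then obtain k where k: "i = Suc k" by (cases i) auto
  have "TR k \<otimes>\<^bsub>RedTB n\<^esub> TR (Suc k) \<otimes>\<^bsub>RedTB n\<^esub> TR k = TR (Suc k) \<otimes>\<^bsub>RedTB n\<^esub> TR k \<otimes>\<^bsub>RedTB n\<^esub> TR (Suc k)"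
    using a k by (intro R.T_braid) simp
  then show ?thesis unfolding okR_def using a k by (simp add: cRsimps del: RV.Tr.simps)
qed

lemma F2: "1 \<le> i \<Longrightarrow> i+1 \<le> n \<Longrightarrow> 1 \<le> j \<Longrightarrow> j+1 \<le> n \<Longrightarrow> i+2 \<le> j \<or> j+2 \<le> i \<Longrightarrow>
  okR n (s i @ s j, s j @ s i)"
proof -
  assume a: "1 \<le> i" "i+1 \<le> n" "1 \<le> j" "j+1 \<le> n" "i+2 \<le> j \<or> j+2 \<le> i"
  obtain k where k: "i = Suc k" using a by (cases i) auto
  obtain m where m: "j = Suc m" using a by (cases j) auto
  have "TR k \<otimes>\<^bsub>RedTB n\<^esub> TR m = TR m \<otimes>\<^bsub>RedTB n\<^esub> TR k"
    using a k m R.T_comm[of k m] R.T_comm[of m k] by auto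
  then show ?thesis unfolding okR_def using a k m by (simp add: cRsimps del: RV.Tr.simps)
qed

lemma F3: "1 \<le> i \<Longrightarrow> i+1 \<le> n \<Longrightarrow> okR n (v i @ v i, [])"
  unfolding okR_def by (simp add: cRsimps RedTB_one[symmetric])

lemma F4: "1 \<le> i \<Longrightarrow> i+1 \<le> n \<Longrightarrow> 1 \<le> j \<Longrightarrow> j+1 \<le> n \<Longrightarrow> i+2 \<le> j \<or> j+2 \<le> i \<Longrightarrow>
  okR n (v i @ v j, v j @ v i)"
proof -
  assume a: "1 \<le> i" "i+1 \<le> n" "1 \<le> j" "j+1 \<le> n" "i+2 \<le> j \<or> j+2 \<le> i"
  have "VR n i \<otimes>\<^bsub>RedTB n\<^esub> VR n j = VR n j \<otimes>\<^bsub>RedTB n\<^esub> VR n i"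
    using a RV.V_comm[of i j] RV.V_comm[of j i] by auto
  then show ?thesis unfolding okR_def using a by (simp add: cRsimps)
qed

lemma F5: "1 \<le> i \<Longrightarrow> i+2 \<le> n \<Longrightarrow> okR n (v i @ v (Suc i) @ v i, v (Suc i) @ v i @ v (Suc i))"
proof -
  assume a: "1 \<le> i" "i+2 \<le> n"
  have "VR n i \<otimes>\<^bsub>RedTB n\<^esub> VR n (Suc i) \<otimes>\<^bsub>RedTB n\<^esub> VR n i = VR n (Suc i) \<otimes>\<^bsub>RedTB n\<^esub> VR n i \<otimes>\<^bsub>RedTB n\<^esub> VR n (Suc i)"
    using a by (intro RV.V_braid) auto
  then show ?thesis unfolding okR_def using a by (simp add: cRsimps)
qed

lemma F6: "1 \<le> i \<Longrightarrow> i \<le> n \<Longrightarrow> okR n (b i @ b i, [])"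
proof -
  assume a: "1 \<le> i" "i \<le> n"
  obtain k where k: "i = Suc k" using a by (cases i) auto
  have "PR k \<otimes>\<^bsub>RedTB n\<^esub> PR k = \<one>\<^bsub>RedTB n\<^esub>" using a k by (intro R.P_inv) simp
  then show ?thesis unfolding okR_def using a k by (simp add: cRsimps RedTB_one[symmetric] del: RV.Br.simps)
qed

lemma F7: "1 \<le> i \<Longrightarrow> i \<le> n \<Longrightarrow> 1 \<le> j \<Longrightarrow> j \<le> n \<Longrightarrow> i \<noteq> j \<Longrightarrow> okR n (b i @ b j, b j @ b i)"
proof -
  assume a: "1 \<le> i" "i \<le> n" "1 \<le> j" "j \<le> n" "i \<noteq> j"
  obtain k where k: "i = Suc k" using a by (cases i) auto
  obtain m where m: "j = Suc m" using a by (cases j) auto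
  have "PR k \<otimes>\<^bsub>RedTB n\<^esub> PR m = PR m \<otimes>\<^bsub>RedTB n\<^esub> PR k"
    using a k m R.P_comm[of k m] R.P_comm[of m k] by (cases "k < m") auto
  then show ?thesis unfolding okR_def using a k m by (simp add: cRsimps del: RV.Br.simps)
qed

lemma F8: "1 \<le> i \<Longrightarrow> i+1 \<le> n \<Longrightarrow> 1 \<le> j \<Longrightarrow> j+1 \<le> n \<Longrightarrow> i+2 \<le> j \<or> j+2 \<le> i \<Longrightarrow>
  okR n (s i @ v j, v j @ s i)"
proof -
  assume a: "1 \<le> i" "i+1 \<le> n" "1 \<le> j" "j+1 \<le> n" "i+2 \<le> j \<or> j+2 \<le> i"
  obtain k where k: "i = Suc k" using a by (cases i) auto
  have "RV.cv j (TR k) = TR k"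
    using a k R.C1[of k j] R.C2[of j k] by auto
  then have "VR n j \<otimes>\<^bsub>RedTB n\<^esub> TR k = TR k \<otimes>\<^bsub>RedTB n\<^esub> VR n j"
    using a RV.cv_fix_iff[of j "TR k"] by (simp add: cR_carr)
  then show ?thesis unfolding okR_def using a k by (simp add: cRsimps del: RV.Tr.simps)
qed

lemma F9: "1 \<le> i \<Longrightarrow> i+2 \<le> n \<Longrightarrow> okR n (v i @ s (Suc i) @ v i, v (Suc i) @ s i @ v (Suc i))"
proof -
  assume a: "1 \<le> i" "i+2 \<le> n"
  obtain k where k: "i = Suc k" using a by (cases i) auto
  show ?thesis unfolding okR_def using a k by (simp add: cRsimps RV.cv_def)
qed

lemma F10: "1 \<le> i \<Longrightarrow> i+1 \<le> n \<Longrightarrow> okR n (b i @ v i, v i @ b (Suc i))"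
proof -
  assume a: "1 \<le> i" "i+1 \<le> n"
  obtain k where k: "i = Suc k" using a by (cases i) auto
  show ?thesis unfolding okR_def using a k by (simp add: cRsimps RV.cv_def)
qed

lemma F11: "1 \<le> i \<Longrightarrow> i+1 \<le> n \<Longrightarrow>
  okR n (b i @ b (Suc i) @ s i @ b (Suc i) @ b i, v i @ s i @ v i)"
proof -
  assume a: "1 \<le> i" "i+1 \<le> n"
  obtain k where k: "i = Suc k" using a by (cases i) auto
  have "PR k \<otimes>\<^bsub>RedTB n\<^esub> PR (Suc k) \<otimes>\<^bsub>RedTB n\<^esub> TR k \<otimes>\<^bsub>RedTB n\<^esub> PR (Suc k) \<otimes>\<^bsub>RedTB n\<^esub> PR k
     = RV.cv (Suc k) (TR k)"
    using a k by (intro R.mixed_h) simp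
  then show ?thesis unfolding okR_def using a k by (simp add: cRsimps RV.cv_def)
qed

lemma F12: "1 \<le> i \<Longrightarrow> i \<le> n \<Longrightarrow> 1 \<le> j \<Longrightarrow> j+1 \<le> n \<Longrightarrow> i < j \<or> j+1 < i \<Longrightarrow>
  okR n (b i @ v j, v j @ b i)"
proof -
  assume a: "1 \<le> i" "i \<le> n" "1 \<le> j" "j+1 \<le> n" "i < j \<or> j+1 < i"
  obtain k where k: "i = Suc k" using a by (cases i) auto
  have "RV.cv j (PR k) = PR k"
    using a k R.C3a[of k j] R.C3b[of j k] by auto
  then have "VR n j \<otimes>\<^bsub>RedTB n\<^esub> PR k = PR k \<otimes>\<^bsub>RedTB n\<^esub> VR n j"
    using a RV.cv_fix_iff[of j "PR k"] by (simp add: cR_carr)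
  then show ?thesis unfolding okR_def using a k by (simp add: cRsimps del: RV.Br.simps)
qed

lemma F13: "1 \<le> i \<Longrightarrow> i \<le> n \<Longrightarrow> 1 \<le> j \<Longrightarrow> j+1 \<le> n \<Longrightarrow> i < j \<or> j+1 < i \<Longrightarrow>
  okR n (b i @ s j, s j @ b i)"
proof -
  assume a: "1 \<le> i" "i \<le> n" "1 \<le> j" "j+1 \<le> n" "i < j \<or> j+1 < i"
  obtain k where k: "i = Suc k" using a by (cases i) auto
  obtain m where m: "j = Suc m" using a by (cases j) auto
  have "PR k \<otimes>\<^bsub>RedTB n\<^esub> TR m = TR m \<otimes>\<^bsub>RedTB n\<^esub> PR k"
    using a k m R.PT_comm1[of m k] R.PT_comm2[of k m] by auto
  then show ?thesis unfolding okR_def using a k m by (simp add: cRsimps del: RV.Br.simps RV.Tr.simps)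
qed

lemma tb_ok: "\<forall>p\<in>tb_rels n. okR n p"
  unfolding tb_rels_def
  apply (intro ballI)
  apply (elim UnE; clarify)
  subgoal by (rule F1[unfolded Suc_eq_plus1]) (use n4 in auto)
  subgoal by (rule F2[unfolded Suc_eq_plus1]) (use n4 in auto)
  subgoal by (rule F3[unfolded Suc_eq_plus1]) (use n4 in auto)
  subgoal by (rule F4[unfolded Suc_eq_plus1]) (use n4 in auto)
  subgoal by (rule F5[unfolded Suc_eq_plus1]) (use n4 in auto)
  subgoal by (rule F6[unfolded Suc_eq_plus1]) (use n4 in auto)
  subgoal by (rule F7[unfolded Suc_eq_plus1]) (use n4 in auto)
  subgoal by (rule F8[unfolded Suc_eq_plus1]) (use n4 in auto)
  subgoal by (rule F9[unfolded Suc_eq_plus1]) (use n4 in auto)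
  subgoal by (rule F10[unfolded Suc_eq_plus1]) (use n4 in auto)
  subgoal by (rule F11[unfolded Suc_eq_plus1]) (use n4 in auto)
  subgoal by (rule F12[unfolded Suc_eq_plus1]) (use n4 in auto)
  subgoal by (rule F13[unfolded Suc_eq_plus1]) (use n4 in auto)
  done


lemma vT_comm: "1 \<le> i \<Longrightarrow> i+1 \<le> n \<Longrightarrow> 1 \<le> j \<Longrightarrow> j+1 \<le> n \<Longrightarrow> i+2 \<le> j \<or> j+2 \<le> i \<Longrightarrow>
  cT n (v i @ v j) = cT n (v j @ v i)"
proof -
  assume a: "1 \<le> i" "i+1 \<le> n" "1 \<le> j" "j+1 \<le> n" "i+2 \<le> j \<or> j+2 \<le> i"
  show ?thesis
  proof (cases "i+2 \<le> j")
    case True thus ?thesis using a by (intro vT_rels(2)) auto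
  next
    case False thus ?thesis using a by (intro vT_rels(2)[symmetric]) auto
  qed
qed

lemma red_ok: "\<forall>p\<in>red_rels n. okT n p"
  unfolding red_rels_def
  apply (intro ballI)
  apply (elim UnE; clarify)
  subgoal unfolding okT_def using vT_rels(3)[simplified] n4 by auto
  subgoal using n4 unfolding okT_def fst_conv snd_conv by (intro conjI vT_comm) auto
  subgoal unfolding okT_def using vT_rels(1)[simplified] n4 by auto
  subgoal unfolding okT_def using tbT(1)[simplified] n4 by auto
  subgoal unfolding okT_def using tbT(2)[simplified] n4 by auto
  subgoal unfolding okT_def using tbT(3)[simplified] n4 by auto
  subgoal unfolding okT_def using Tt.red_rels_hold(4) n4 by (simp add: Tt.cv_def ST_in BT_in VT_in TB_mult)
  subgoal unfolding okT_def using Tt.red_rels_hold(5) n4 by (simp add: Tt.cv_def ST_in BT_in VT_in TB_mult)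
  subgoal unfolding okT_def using Tt.red_rels_hold(6) n4 by (simp add: Tt.cv_def ST_in BT_in VT_in TB_mult)
  subgoal unfolding okT_def using Tt.red_rels_hold(7) n4 by (simp add: Tt.cv_def ST_in BT_in VT_in TB_mult)
  subgoal unfolding okT_def using Tt.red_rels_hold(8) n4 by (simp add: Tt.cv_def ST_in BT_in VT_in TB_mult)
  done


lemma red_sub_tb: "red_gens n \<subseteq> tb_gens n"
  using n4 by (auto simp: red_gens_def tb_gens_def)

lemma wf_red_tb: "wf_word (red_gens n) w \<Longrightarrow> wf_word (tb_gens n) w"
  using red_sub_tb by (auto simp: wf_word_def)

lemma main: "\<exists>h. h \<in> iso (RedTB n) (TB n)
     \<and> h (pres_class (red_gens n) (red_rels n) (s 1)) = pres_class (tb_gens n) (tb_rels n) (s 1)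
     \<and> h (pres_class (red_gens n) (red_rels n) (b 1)) = pres_class (tb_gens n) (tb_rels n) (b 1)
     \<and> (\<forall>i. 1 \<le> i \<and> i \<le> n - 1 \<longrightarrow>
          h (pres_class (red_gens n) (red_rels n) (v i)) = pres_class (tb_gens n) (tb_rels n) (v i))
     \<and> (\<forall>i. 1 \<le> i \<and> i \<le> n - 2 \<longrightarrow>
          h (pres_class (red_gens n) (red_rels n) (sig_word i)) = pres_class (tb_gens n) (tb_rels n) (s (i+1)))
     \<and> (\<forall>i. 1 \<le> i \<and> i \<le> n - 1 \<longrightarrow>
          h (pres_class (red_gens n) (red_rels n) (bar_word i)) = pres_class (tb_gens n) (tb_rels n) (b (i+1)))"
proof -
  define phi where "phi = (\<lambda>x::tbgen. [(x, False)])"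
  define h where "h = shom (red_gens n) (red_rels n) (tb_gens n) (tb_rels n) phi"
  define g where "g = shom (tb_gens n) (tb_rels n) (red_gens n) (red_rels n) psi"
  have wsphi: "wsubst phi w = w" for w unfolding phi_def by (rule wsubst_id)
  have phi_wf: "\<forall>x\<in>red_gens n. wf_word (tb_gens n) (phi x)"
    using red_sub_tb by (auto simp: phi_def)
  have phi_rel: "\<forall>(l,r)\<in>red_rels n. pres_eq (tb_gens n) (tb_rels n) (wsubst phi l) (wsubst phi r)"
  proof (intro ballI, clarify)
    fix l r assume "(l, r) \<in> red_rels n"
    then have "okT n (l, r)" using red_ok by blast
    then show "pres_eq (tb_gens n) (tb_rels n) (wsubst phi l) (wsubst phi r)"
      unfolding okT_def wsphi fst_conv snd_conv using cls_eq_iff[of "tb_gens n" l "tb_rels n" r] by blast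
  qed
  have psi_wf: "\<forall>x\<in>tb_gens n. wf_word (red_gens n) (psi x)"
    by (auto simp: tb_gens_def psi_def intro!: wf_sig(1) wf_bar(1))
  have psi_rel: "\<forall>(l,r)\<in>tb_rels n. pres_eq (red_gens n) (red_rels n) (wsubst psi l) (wsubst psi r)"
  proof (intro ballI, clarify)
    fix l r assume "(l, r) \<in> tb_rels n"
    then have "okR n (l, r)" using tb_ok by blast
    then show "pres_eq (red_gens n) (red_rels n) (wsubst psi l) (wsubst psi r)"
      unfolding okR_def fst_conv snd_conv using cls_eq_iff[of "red_gens n" "wsubst psi l" "red_rels n" "wsubst psi r"] by blast
  qed
  have hhom: "h \<in> hom (RedTB n) (TB n)"
    unfolding h_def RedTB_def TB_def by (rule shom_hom[OF phi_wf phi_rel])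
  have ghom: "g \<in> hom (TB n) (RedTB n)"
    unfolding g_def RedTB_def TB_def by (rule shom_hom[OF psi_wf psi_rel])
  have h_cls: "h (cR n w) = cT n w" if "wf_word (red_gens n) w" for w
    unfolding h_def using shom_cls[OF phi_wf phi_rel that] wsphi by simp
  have g_cls: "g (cT n w) = cR n (wsubst psi w)" if "wf_word (tb_gens n) w" for w
    unfolding g_def using shom_cls[OF psi_wf psi_rel that] by simp
  have sig0: "sig_word 0 = s 1" by (simp add: sig_word_def vdown_def vup_def)
  have bar0: "bar_word 0 = b 1" by (simp add: bar_word_def vdown_def vup_def)
  have psi_id_red: "\<forall>x\<in>red_gens n. pres_eq (red_gens n) (red_rels n) (psi x) [(x,False)]"
  proof
    fix x assume x: "x \<in> red_gens n"
    have "psi x = [(x, False)]" using x by (auto simp: red_gens_def psi_def sig0 bar0 s_def b_def v_def)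
    then show "pres_eq (red_gens n) (red_rels n) (psi x) [(x,False)]" using x by (simp add: pres_eq.refl)
  qed
  have psi_id_tb: "\<forall>x\<in>tb_gens n. pres_eq (tb_gens n) (tb_rels n) (psi x) [(x,False)]"
  proof
    fix x assume x: "x \<in> tb_gens n"
    show "pres_eq (tb_gens n) (tb_rels n) (psi x) [(x,False)]"
    proof (cases x)
      case (TSig i)
      then have i: "1 \<le> i" "i+1 \<le> n" using x by (auto simp: tb_gens_def)
      then have "cT n (sig_word (i-1)) = cT n (s (Suc (i-1)))" by (intro cT_sig) auto
      moreover have "wf_word (tb_gens n) (sig_word (i-1))" using i by (intro wf_sig(2)) auto
      ultimately show ?thesis using TSig i by (simp add: psi_def cls_eq_iff s_def)
    next
      case (TVir i)
      then show ?thesis using x by (simp add: psi_def v_def pres_eq.refl)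
    next
      case (TBar i)
      then have i: "1 \<le> i" "i \<le> n" using x by (auto simp: tb_gens_def)
      then have "cT n (bar_word (i-1)) = cT n (b (Suc (i-1)))" by (intro cT_bar) auto
      moreover have "wf_word (tb_gens n) (bar_word (i-1))" using i by (intro wf_bar(2)) auto
      ultimately show ?thesis using TBar i by (simp add: psi_def cls_eq_iff b_def)
    qed
  qed
  have bij: "bij_betw h (carrier (RedTB n)) (carrier (TB n))"
  proof (rule bij_betwI)
    show "h \<in> carrier (RedTB n) \<rightarrow> carrier (TB n)" using hhom unfolding hom_def by blast
    show "g \<in> carrier (TB n) \<rightarrow> carrier (RedTB n)" using ghom unfolding hom_def by blast
  next
    fix x assume "x \<in> carrier (RedTB n)"
    then obtain w where w: "wf_word (red_gens n) w" "x = cR n w"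
      by (auto simp: RedTB_def PG_carrier)
    have pe: "pres_eq (red_gens n) (red_rels n) (wsubst psi w) w"
      by (rule wsubst_near_id[OF psi_id_red w(1)])
    have "cR n (wsubst psi w) = cR n w"
      using cls_eq_iff[of "red_gens n" "wsubst psi w" "red_rels n" w] pres_eq_wf[OF pe] pe by blast
    then show "g (h x) = x" using w wf_red_tb[OF w(1)] by (simp add: h_cls g_cls)
  next
    fix y assume "y \<in> carrier (TB n)"
    then obtain w where w: "wf_word (tb_gens n) w" "y = cT n w"
      by (auto simp: TB_def PG_carrier)
    have ww: "wf_word (red_gens n) (wsubst psi w)" by (rule wf_wsubst[OF psi_wf w(1)])
    have pe: "pres_eq (tb_gens n) (tb_rels n) (wsubst psi w) w"
      by (rule wsubst_near_id[OF psi_id_tb w(1)])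
    have "cT n (wsubst psi w) = cT n w"
      using cls_eq_iff[of "tb_gens n" "wsubst psi w" "tb_rels n" w] pres_eq_wf[OF pe] pe by blast
    then show "h (g y) = y" using w ww by (simp add: h_cls g_cls)
  qed
  have iso: "h \<in> iso (RedTB n) (TB n)" unfolding iso_def using hhom bij by blast
  show ?thesis
  proof (intro exI conjI allI impI)
    show "h \<in> iso (RedTB n) (TB n)" by (rule iso)
    show "h (cR n (s 1)) = cT n (s 1)" by (simp add: h_cls)
    show "h (cR n (b 1)) = cT n (b 1)" by (simp add: h_cls)
    show "h (cR n (v i)) = cT n (v i)" if "1 \<le> i \<and> i \<le> n - 1" for i
    proof -
      have "wf_word (red_gens n) (v i)" using that n4 by auto
      then show ?thesis by (rule h_cls)
    qed
    show "h (cR n (sig_word i)) = cT n (s (i+1))" if "1 \<le> i \<and> i \<le> n - 2" for i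
    proof -
      have i: "i+2 \<le> n" using that n4 by auto
      show ?thesis using h_cls[OF wf_sig(1)[OF i]] cT_sig[OF i] by simp
    qed
    show "h (cR n (bar_word i)) = cT n (b (i+1))" if "1 \<le> i \<and> i \<le> n - 1" for i
    proof -
      have i: "i+1 \<le> n" using that n4 by auto
      show ?thesis using h_cls[OF wf_bar(1)[OF i]] cT_bar[OF i] by simp
    qed
  qed
qed

end

theorem theorem9:
  fixes n :: nat
  assumes "n \<ge> 4"
  shows "\<exists>h. h \<in> iso (RedTB n) (TB n)
     \<and> h (pres_class (red_gens n) (red_rels n) (s 1)) = pres_class (tb_gens n) (tb_rels n) (s 1)
     \<and> h (pres_class (red_gens n) (red_rels n) (b 1)) = pres_class (tb_gens n) (tb_rels n) (b 1)
     \<and> (\<forall>i. 1 \<le> i \<and> i \<le> n - 1 \<longrightarrow>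
          h (pres_class (red_gens n) (red_rels n) (v i)) = pres_class (tb_gens n) (tb_rels n) (v i))
     \<and> (\<forall>i. 1 \<le> i \<and> i \<le> n - 2 \<longrightarrow>
          h (pres_class (red_gens n) (red_rels n) (sig_word i)) = pres_class (tb_gens n) (tb_rels n) (s (i+1)))
     \<and> (\<forall>i. 1 \<le> i \<and> i \<le> n - 1 \<longrightarrow>
          h (pres_class (red_gens n) (red_rels n) (bar_word i)) = pres_class (tb_gens n) (tb_rels n) (b (i+1)))"
proof -
  interpret tbctx n using assms by unfold_locales
  show ?thesis by (rule main)
qed

end
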